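(* Consider Setting A (stated in the context), and suppose the sequence of communication graphs $\{\mathcal G[k]\}_{k\ge 0}$ satisfies conditions (C1), (C2) and (C3). Then for every desired rate $\rho\in(0,1)$ there exist observer gains $L_1,\dots,L_N$ (with $L_j$ of compatible dimensions, $L_j$ used by node $j$) such that, when all nodes run Algorithm 1, for every initial state $x[0]$ and all initial estimates there exist constants $c\ge 0$ and $K\in\mathbb N$ with $$\|\hat x_i[k]-x[k]\|\le c\,\rho^k\quad\text{for all }k\ge K\text{ and all }i\in\mathcal V,$$ where $\hat x_i[k]=T\hat z_i[k]$ and $\hat z_i[k]$ stacks $\hat z^{(1)}_i[k],\dots,\hat z^{(N)}_i[k]$.
   Context: Setting A. Consider the discrete-time LTI system $x[k+1]=Ax[k]$, $k\in\mathbb N$, with $A\in\mathbb R^{n\times n}$, monitored by $N$ nodes $\mathcal V=\{1,\dots,N\}$; node $i$ measures $y_i[k]=C_ix[k]$ with $C_i\in\mathbb R^{r_i\times n}$. Let $C=[C_1^T\ \cdots\ C_N^T]^T$ and assume $(A,C)$ is observable. Fix an invertible $T$ such that $\bar A=T^{-1}AT$ is block lower-triangular with diagonal blocks $A_{11},\dots,A_{NN}$ and off-diagonal blocks $A_{jq}$ ($q<j$), zero blocks above the diagonal, and $C_iT=[C_{i1}\ \cdots\ C_{ii}\ 0\ \cdots\ 0]$ for each $i$, with $(A_{jj},C_{jj})$ observable for every $j$ (such $T$ exists). With $z[k]=T^{-1}x[k]$ partitioned compatibly into sub-states $z^{(1)}[k],\dots,z^{(N)}[k]$, one has $z^{(j)}[k+1]=A_{jj}z^{(j)}[k]+\sum_{q=1}^{j-1}A_{jq}z^{(q)}[k]$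 and $y_j[k]=\sum_{q=1}^{j}C_{jq}z^{(q)}[k]$. Node $j$ is called the source node of sub-state $j$. Communication: at each time $k$ there is a directed graph $\mathcal G[k]=(\mathcal V,\mathcal E[k])$; $(l,i)\in\mathcal E[k]$ means $l$ can send to $i$ at time $k$; $\mathcal N_i[k]=\{l\neq i:(l,i)\in\mathcal E[k]\}$. The union graph over $[k_1,k_2]$ has vertex set $\mathcal V$ and edge set $\bigcup_{\tau=k_1}^{k_2}\mathcal E[\tau]$. Algorithm 1 (run for every sub-state $j$ simultaneously). Each node $i$ keeps an estimate $\hat z^{(j)}_i[k]$ (arbitrary initial value) and a freshness index $\tau^{(j)}_i[k]\in\mathbb N\cup\{\omega\}$, where $\omega$ is a special symbol; initially $\tau^{(j)}_j[0]=0$ and $\tau^{(j)}_i[0]=\omega$ for $i\ne j$. Source node $j$: $\tau^{(j)}_j[k]=0$ for all $k$, and $\hat z^{(j)}_j[k+1]=(A_{jj}-L_jC_{jj})\hat z^{(j)}_j[k]+\sum_{q=1}^{j-1}(A_{jq}-L_jC_{jq})\hat z^{(q)}_j[k]+L_jy_j[k]$, where $L_j$ is an observer gain. Non-source node $i\neq j$ at time $k$: let $\mathcal M^{(j)}_i[k]=\{l\in\mathcal N_i[k]:\tau^{(j)}_l[k]\neq\omega\}$; if $\tau^{(j)}_i[k]=\omega$ let $\mathcal F^{(j)}_i[k]=\mathcal M^{(j)}_i[k]$, otherwise $\mathcal F^{(j)}_i[k]=\{l\in\mathcal M^{(j)}_i[k]:\tau^{(j)}_l[k]<\tau^{(j)}_i[k]\}$.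 If $\mathcal F^{(j)}_i[k]\ne\emptyset$, pick $u\in\arg\min_{l\in\mathcal F^{(j)}_i[k]}\tau^{(j)}_l[k]$ and set $\tau^{(j)}_i[k+1]=\tau^{(j)}_u[k]+1$ and $\hat z^{(j)}_i[k+1]=A_{jj}\hat z^{(j)}_u[k]+\sum_{q=1}^{j-1}A_{jq}\hat z^{(q)}_i[k]$ ("$i$ adopts the information of $u$ at time $k$"). If $\mathcal F^{(j)}_i[k]=\emptyset$, set $\tau^{(j)}_i[k+1]=\omega$ if $\tau^{(j)}_i[k]=\omega$ and $\tau^{(j)}_i[k+1]=\tau^{(j)}_i[k]+1$ otherwise, and $\hat z^{(j)}_i[k+1]=A_{jj}\hat z^{(j)}_i[k]+\sum_{q=1}^{j-1}A_{jq}\hat z^{(q)}_i[k]$ ("$i$ adopts its own information"). Conditions on the graph sequence: there is an increasing sequence $\mathbb I=\{t_0,t_1,\dots\}\subset\mathbb N$ with $t_0=0$ such that, with $f(t_q)=t_{q+1}-t_q$: (C1) $f(t_q)$ is non-decreasing in $q$; (C2) with $m(k)=\max\{t_q\in\mathbb I:t_q\le k\}$ and $g(k)=f(m(k))$, one has $\limsup_{k\to\infty}\frac{2(N-1)g(k)}{k}=\delta<1$; (C3) for each $q$, the union graph over $[t_q,t_{q+1}-1]$ is strongly connected. *)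

theory Defs
  imports "Jordan_Normal_Form.Matrix" "HOL-Library.Liminf_Limsup" "HOL-Library.Extended_Real"
begin

(* Block bookkeeping: blocks of sizes d 0, d 1, ... ; block j occupies indices
   off d j ..< off d (Suc j). *)
definition off :: "(nat \<Rightarrow> nat) \<Rightarrow> nat \<Rightarrow> nat" where
  "off d j = (\<Sum>i<j. d i)"

definition blk :: "(nat \<Rightarrow> nat) \<Rightarrow> nat \<Rightarrow> nat" where
  "blk d a = (LEAST j. a < off d (Suc j))"

definition stack_vec :: "(nat \<Rightarrow> nat) \<Rightarrow> nat \<Rightarrow> (nat \<Rightarrow> real vec) \<Rightarrow> real vec" where
  "stack_vec d N v = vec (off d N) (\<lambda>a. v (blk d a) $ (a - off d (blk d a)))"

definition vstack_mat :: "(nat \<Rightarrow> nat) \<Rightarrow> nat \<Rightarrow> nat \<Rightarrow> (nat \<Rightarrow> real mat) \<Rightarrow> real mat" where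
  "vstack_mat r N m M = mat (off r N) m (\<lambda>(a,b). M (blk r a) $$ (a - off r (blk r a), b))"

definition blk_lower_mat :: "(nat \<Rightarrow> nat) \<Rightarrow> nat \<Rightarrow> (nat \<Rightarrow> nat \<Rightarrow> real mat) \<Rightarrow> real mat" where
  "blk_lower_mat d N Ab = mat (off d N) (off d N) (\<lambda>(a,b).
     (let j = blk d a; q = blk d b in
      if q \<le> j then Ab j q $$ (a - off d j, b - off d q) else 0))"

definition blk_row_mat :: "(nat \<Rightarrow> nat) \<Rightarrow> nat \<Rightarrow> nat \<Rightarrow> nat \<Rightarrow> (nat \<Rightarrow> real mat) \<Rightarrow> real mat" where
  "blk_row_mat d N ri i Cbi = mat ri (off d N) (\<lambda>(a,b).
     (let q = blk d b in if q \<le> i then Cbi q $$ (a, b - off d q) else 0))"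

definition vsum :: "nat \<Rightarrow> ('i \<Rightarrow> real vec) \<Rightarrow> 'i set \<Rightarrow> real vec" where
  "vsum m F S = vec m (\<lambda>a. \<Sum>q\<in>S. F q $ a)"

definition vnorm :: "real vec \<Rightarrow> real" where
  "vnorm v = sqrt (\<Sum>a<dim_vec v. (vec_index v a)^2)"

definition observable :: "real mat \<Rightarrow> real mat \<Rightarrow> bool" where
  "observable A C \<longleftrightarrow> (\<forall>w \<in> carrier_vec (dim_col A).
      (\<forall>k. C *\<^sub>v ((A ^\<^sub>m k) *\<^sub>v w) = 0\<^sub>v (dim_row C)) \<longrightarrow> w = 0\<^sub>v (dim_col A))"

(* Conditions (C1)-(C3) on the edge sequence E (E k = edge set at time k,
   (l,i) \<in> E k means l can send to i), vertex set {..<N}. *)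
definition graph_conditions :: "nat \<Rightarrow> (nat \<Rightarrow> (nat \<times> nat) set) \<Rightarrow> bool" where
  "graph_conditions N E \<longleftrightarrow> (\<exists>t :: nat \<Rightarrow> nat. strict_mono t \<and> t 0 = 0 \<and>
     (let f = (\<lambda>q. t (Suc q) - t q);
          g = (\<lambda>k. f (GREATEST q. t q \<le> k)) in
       mono f \<and>
       limsup (\<lambda>k. ereal (2 * (real N - 1) * real (g k) / real k)) < 1 \<and>
       (\<forall>q. \<forall>i<N. \<forall>l<N. (i, l) \<in> (\<Union>\<tau>\<in>{t q..<t (Suc q)}. E \<tau>)\<^sup>*)))"

(* Algorithm 1: zh k i j = estimate of sub-state j held by node i at time k,
   tau k i j = freshness index (None = omega).  Any choice of u among the
   minimisers is allowed. y k j = measurement of node j at time k. *)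
definition alg_run ::
  "nat \<Rightarrow> (nat \<Rightarrow> nat) \<Rightarrow> (nat \<Rightarrow> nat \<Rightarrow> real mat) \<Rightarrow> (nat \<Rightarrow> nat \<Rightarrow> real mat) \<Rightarrow>
   (nat \<Rightarrow> real mat) \<Rightarrow> (nat \<Rightarrow> (nat \<times> nat) set) \<Rightarrow> (nat \<Rightarrow> nat \<Rightarrow> real vec) \<Rightarrow>
   (nat \<Rightarrow> nat \<Rightarrow> nat \<Rightarrow> real vec) \<Rightarrow> (nat \<Rightarrow> nat \<Rightarrow> nat \<Rightarrow> nat option) \<Rightarrow> bool" where
  "alg_run N d Ab Cb L E y zh tau \<longleftrightarrow>
    (\<forall>k. \<forall>i<N. \<forall>j<N. zh k i j \<in> carrier_vec (d j)) \<and>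
    (\<forall>i<N. \<forall>j<N. tau 0 i j = (if i = j then Some 0 else None)) \<and>
    (\<forall>k. \<forall>j<N.
       tau k j j = Some 0 \<and>
       zh (Suc k) j j = (Ab j j - L j * Cb j j) *\<^sub>v zh k j j
          + vsum (d j) (\<lambda>q. (Ab j q - L j * Cb j q) *\<^sub>v zh k j q) {..<j}
          + L j *\<^sub>v y k j) \<and>
    (\<forall>k. \<forall>i<N. \<forall>j<N. i \<noteq> j \<longrightarrow>
       (let M = {l. l < N \<and> l \<noteq> i \<and> (l, i) \<in> E k \<and> tau k l j \<noteq> None};
            F = (if tau k i j = None then M
                 else {l \<in> M. the (tau k l j) < the (tau k i j)});
            own = vsum (d j) (\<lambda>q. Ab j q *\<^sub>v zh k i q) {..<j} in
        (F \<noteq> {} \<longrightarrow>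
           (\<exists>u\<in>F. (\<forall>l\<in>F. the (tau k u j) \<le> the (tau k l j)) \<and>
              tau (Suc k) i j = Some (Suc (the (tau k u j))) \<and>
              zh (Suc k) i j = Ab j j *\<^sub>v zh k u j + own)) \<and>
        (F = {} \<longrightarrow>
           tau (Suc k) i j = map_option Suc (tau k i j) \<and>
           zh (Suc k) i j = Ab j j *\<^sub>v zh k i j + own)))"

end

theory Submission
  imports Defs
begin


lemma dim_vsum[simp]: "dim_vec (vsum n F S) = n" by (simp add: vsum_def)
lemma vsum_carrier[simp]: "vsum n F S \<in> carrier_vec n" by (simp add: vsum_def)
lemma index_vsum[simp]: "a < n \<Longrightarrow> vsum n F S $ a = (\<Sum>q\<in>S. F q $ a)"
  by (simp add: vsum_def)

lemma carrier_eqI: "u \<in> carrier_vec n \<Longrightarrow> v \<in> carrier_vec n \<Longrightarrow> (\<And>a. a < n \<Longrightarrow> u $ a = v $ a) \<Longrightarrow> u = v"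
  by (rule eq_vecI) auto

lemma vsum_insert: "finite S \<Longrightarrow> x \<notin> S \<Longrightarrow> F x \<in> carrier_vec n \<Longrightarrow>
   vsum n F (insert x S) = F x + vsum n F S"
  by (rule eq_vecI) auto

lemma vsum_empty[simp]: "vsum n F {} = 0\<^sub>v n" by (rule eq_vecI) auto

definition linop :: "nat \<Rightarrow> (real vec \<Rightarrow> real vec) \<Rightarrow> bool" where
 "linop n f \<longleftrightarrow> (\<forall>x\<in>carrier_vec n. f x \<in> carrier_vec n) \<and>
   (\<forall>x\<in>carrier_vec n. \<forall>y\<in>carrier_vec n. f (x + y) = f x + f y) \<and>
   (\<forall>a. \<forall>x\<in>carrier_vec n. f (a \<cdot>\<^sub>v x) = a \<cdot>\<^sub>v f x)"

definition linfun :: "nat \<Rightarrow> (real vec \<Rightarrow> real) \<Rightarrow> bool" where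
 "linfun n h \<longleftrightarrow> (\<forall>x\<in>carrier_vec n. \<forall>y\<in>carrier_vec n. h (x + y) = h x + h y) \<and>
   (\<forall>a. \<forall>x\<in>carrier_vec n. h (a \<cdot>\<^sub>v x) = a * h x)"

definition subsp :: "nat \<Rightarrow> real vec set \<Rightarrow> bool" where
 "subsp n V \<longleftrightarrow> V \<subseteq> carrier_vec n \<and> 0\<^sub>v n \<in> V \<and> (\<forall>x\<in>V. \<forall>y\<in>V. x + y \<in> V)
    \<and> (\<forall>a. \<forall>x\<in>V. a \<cdot>\<^sub>v x \<in> V)"

definition spanset :: "nat \<Rightarrow> (nat \<Rightarrow> real vec) \<Rightarrow> nat set \<Rightarrow> real vec set" where
 "spanset n bs I = {vsum n (\<lambda>i. a i \<cdot>\<^sub>v bs i) I | a. True}"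

lemma linop_carrier: "linop n f \<Longrightarrow> x \<in> carrier_vec n \<Longrightarrow> f x \<in> carrier_vec n"
  by (simp add: linop_def)
lemma linop_add: "linop n f \<Longrightarrow> x \<in> carrier_vec n \<Longrightarrow> y \<in> carrier_vec n \<Longrightarrow> f (x + y) = f x + f y"
  by (simp add: linop_def)
lemma linop_smult: "linop n f \<Longrightarrow> x \<in> carrier_vec n \<Longrightarrow> f (a \<cdot>\<^sub>v x) = a \<cdot>\<^sub>v f x"
  by (simp add: linop_def)
lemma z0: "(0::real) \<cdot>\<^sub>v 0\<^sub>v n = 0\<^sub>v n" by (rule eq_vecI) auto

lemma linop_zero: assumes "linop n f" shows "f (0\<^sub>v n) = 0\<^sub>v n"
proof -
  have "f (0\<^sub>v n) = f ((0::real) \<cdot>\<^sub>v 0\<^sub>v n)" using z0 by simp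
  also have "\<dots> = 0 \<cdot>\<^sub>v f (0\<^sub>v n)" using linop_smult[OF assms] by simp
  also have "\<dots> = 0\<^sub>v n" using linop_carrier[OF assms, of "0\<^sub>v n"] by (intro eq_vecI) auto
  finally show ?thesis .
qed

lemma linfun_add: "linfun n h \<Longrightarrow> x \<in> carrier_vec n \<Longrightarrow> y \<in> carrier_vec n \<Longrightarrow> h (x + y) = h x + h y"
  by (simp add: linfun_def)
lemma linfun_smult: "linfun n h \<Longrightarrow> x \<in> carrier_vec n \<Longrightarrow> h (a \<cdot>\<^sub>v x) = a * h x"
  by (simp add: linfun_def)
lemma linfun_zero: assumes "linfun n h" shows "h (0\<^sub>v n) = 0"
proof -
  have "h (0\<^sub>v n) = h ((0::real) \<cdot>\<^sub>v 0\<^sub>v n)" using z0 by simp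
  also have "\<dots> = 0" using linfun_smult[OF assms] by simp
  finally show ?thesis .
qed

lemma linfun_vsum: assumes "linfun n h" "finite S" "\<forall>q\<in>S. F q \<in> carrier_vec n"
  shows "h (vsum n F S) = (\<Sum>q\<in>S. h (F q))"
  using assms(2,3)
proof (induction S rule: finite_induct)
  case empty then show ?case using linfun_zero[OF assms(1)] by simp
next
  case (insert x S)
  then show ?case using vsum_insert[of S x F n] linfun_add[OF assms(1)] by simp
qed

lemma linop_vsum: assumes "linop n f" "finite S" "\<forall>q\<in>S. F q \<in> carrier_vec n"
  shows "f (vsum n F S) = vsum n (\<lambda>q. f (F q)) S"
  using assms(2,3)
proof (induction S rule: finite_induct)
  case empty then show ?case using linop_zero[OF assms(1)] by simp
next
  case (insert x S)
  then show ?case using vsum_insert[of S x F n] vsum_insert[of S x "\<lambda>q. f (F q)" n]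
      linop_add[OF assms(1)] linop_carrier[OF assms(1)] by simp
qed

lemma subsp_carrier: "subsp n V \<Longrightarrow> x \<in> V \<Longrightarrow> x \<in> carrier_vec n"
  by (auto simp: subsp_def)
lemma subsp_zero: "subsp n V \<Longrightarrow> 0\<^sub>v n \<in> V" by (auto simp: subsp_def)
lemma subsp_add: "subsp n V \<Longrightarrow> x \<in> V \<Longrightarrow> y \<in> V \<Longrightarrow> x + y \<in> V" by (auto simp: subsp_def)
lemma subsp_smult: "subsp n V \<Longrightarrow> x \<in> V \<Longrightarrow> a \<cdot>\<^sub>v x \<in> V" by (auto simp: subsp_def)
lemma subsp_minus: assumes "subsp n V" "x \<in> V" "y \<in> V" shows "x - y \<in> V"
proof -
  have "x - y = x + (-1) \<cdot>\<^sub>v y"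
    using subsp_carrier[OF assms(1,2)] subsp_carrier[OF assms(1,3)] by (intro eq_vecI) auto
  then show ?thesis using assms subsp_add subsp_smult by metis
qed

lemma subsp_vsum: assumes "subsp n V" "finite S" "\<forall>q\<in>S. F q \<in> V"
  shows "vsum n F S \<in> V"
  using assms(2,3)
proof (induction S rule: finite_induct)
  case empty then show ?case using subsp_zero[OF assms(1)] by simp
next
  case (insert x S)
  then show ?case using vsum_insert[of S x F n] subsp_add[OF assms(1)] subsp_carrier[OF assms(1)] by simp
qed


lemma linfun_minus: assumes "linfun n h" "x \<in> carrier_vec n" "y \<in> carrier_vec n"
  shows "h (x - y) = h x - h y"
proof -
  have "x - y = x + (-1) \<cdot>\<^sub>v y" using assms by (intro eq_vecI) auto
  then show ?thesis using assms linfun_add linfun_smult by (metis mult_minus1 smult_carrier_vec uminus_add_conv_diff add.commute)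
qed

lemma add_zero_smult: "x \<in> carrier_vec n \<Longrightarrow> s \<in> carrier_vec n \<Longrightarrow> x + (0::real) \<cdot>\<^sub>v s = x"
  by (rule eq_vecI) auto

lemma vsum_smult_index: "a < n \<Longrightarrow> (\<forall>i\<in>S. F i \<in> carrier_vec n) \<Longrightarrow>
   vsum n (\<lambda>i. w i \<cdot>\<^sub>v F i) S $ a = (\<Sum>i\<in>S. w i * F i $ a)"
  by (auto intro!: sum.cong)

lemma deadbeat_trivial:
  assumes "subsp n V" "V \<subseteq> {0\<^sub>v n}"
  shows "\<exists>ls. (\<forall>i<r. ls i \<in> V) \<and> (\<exists>m. \<forall>w\<in>V. ((\<lambda>e. f e - vsum n (\<lambda>i. h i e \<cdot>\<^sub>v ls i) {..<r}) ^^ m) w = 0\<^sub>v n)"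
  using assms subsp_zero[OF assms(1)] by (intro exI[of _ "\<lambda>_. 0\<^sub>v n"] conjI exI[of _ 0]) auto


lemma deadbeat_gen:
  fixes r n k :: nat and I :: "nat set" and h :: "nat \<Rightarrow> real vec \<Rightarrow> real"
  assumes "card I \<le> k" "finite I" "subsp n V" "bs ` I \<subseteq> V" "V \<subseteq> spanset n bs I"
    "linop n f" "f ` V \<subseteq> V" "\<forall>i<r. linfun n (h i)"
    "\<forall>w\<in>V. (\<forall>k. \<forall>i<r. h i ((f ^^ k) w) = 0) \<longrightarrow> w = 0\<^sub>v n"
  shows "\<exists>ls. (\<forall>i<r. ls i \<in> V) \<and> (\<exists>m. \<forall>w\<in>V. ((\<lambda>e. f e - vsum n (\<lambda>i. h i e \<cdot>\<^sub>v ls i) {..<r}) ^^ m) w = 0\<^sub>v n)"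
  using assms
proof (induction k arbitrary: I V bs f h r)
  case 0
  then have "I = {}" by auto
  then have "V \<subseteq> {0\<^sub>v n}" using 0 by (auto simp: spanset_def)
  then show ?case using deadbeat_trivial[OF 0(3)] by blast
next
  case (Suc k)
  note sub = Suc.prems(3) and lf = Suc.prems(6) and fV = Suc.prems(7) and lh = Suc.prems(8)
    and obs = Suc.prems(9)
  have VC: "\<And>x. x \<in> V \<Longrightarrow> x \<in> carrier_vec n" using sub subsp_carrier by blast
  show ?case
  proof (cases "V \<subseteq> {0\<^sub>v n}")
    case True then show ?thesis using deadbeat_trivial[OF sub] by blast
  next
    case False
    then obtain w0 where w0: "w0 \<in> V" "w0 \<noteq> 0\<^sub>v n" by auto
    have fkV: "\<And>w. w \<in> V \<Longrightarrow> (f ^^ j) w \<in> V" for j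
      by (induction j) (use fV in auto)
    obtain u i0 where u: "u \<in> V" "i0 < r" "h i0 u \<noteq> 0"
    proof -
      have "\<exists>u\<in>V. \<exists>i<r. h i u \<noteq> 0"
      proof (rule ccontr)
        assume "\<not> ?thesis"
        then have "\<forall>k. \<forall>i<r. h i ((f ^^ k) w0) = 0" using fkV[OF w0(1)] by blast
        then show False using obs w0 by blast
      qed
      then show ?thesis using that by blast
    qed
    define c where "c = h i0"
    have lc: "linfun n c" using lh u(2) c_def by simp
    define s where "s = (1 / c u) \<cdot>\<^sub>v u"
    have sV: "s \<in> V" using subsp_smult[OF sub u(1)] s_def by simp
    have cs: "c s = 1" using u(3) linfun_smult[OF lc VC[OF u(1)]] by (simp add: s_def c_def)
    define P where "P = (\<lambda>x. x + (- c x) \<cdot>\<^sub>v s)"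
    define V' where "V' = {x\<in>V. c x = 0}"
    have sC: "s \<in> carrier_vec n" using VC sV by blast
    have PC: "\<And>x. x \<in> carrier_vec n \<Longrightarrow> P x \<in> carrier_vec n" using sC by (simp add: P_def)
    have cP: "\<And>x. x \<in> carrier_vec n \<Longrightarrow> c (P x) = 0"
      using linfun_add[OF lc] linfun_smult[OF lc] sC cs by (simp add: P_def)
    have PV: "\<And>x. x \<in> V \<Longrightarrow> P x \<in> V'"
      using cP VC subsp_add[OF sub] subsp_smult[OF sub] sV by (auto simp: P_def V'_def)
    have sub': "subsp n V'"
      using sub linfun_add[OF lc] linfun_smult[OF lc] linfun_zero[OF lc] VC
      unfolding subsp_def V'_def by auto
    have V'V: "V' \<subseteq> V" by (auto simp: V'_def)
    have lP: "linop n P"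
      unfolding linop_def
    proof (intro conjI ballI allI)
      fix x y :: "real vec" assume x: "x \<in> carrier_vec n" and y: "y \<in> carrier_vec n"
      show "P (x + y) = P x + P y"
        using x y sC linfun_add[OF lc x y] by (intro eq_vecI) (auto simp: P_def algebra_simps)
    next
      fix a :: real and x :: "real vec" assume x: "x \<in> carrier_vec n"
      show "P (a \<cdot>\<^sub>v x) = a \<cdot>\<^sub>v P x"
        using x sC linfun_smult[OF lc x] by (intro eq_vecI) (auto simp: P_def algebra_simps)
    qed (use PC in auto)
    define f' where "f' = (\<lambda>x. P (f x))"
    have lf': "linop n f'" unfolding linop_def f'_def
      using linop_add[OF lf] linop_smult[OF lf] linop_carrier[OF lf]
        linop_add[OF lP] linop_smult[OF lP] linop_carrier[OF lP] by auto
    have f'V: "f' ` V' \<subseteq> V'" using fV V'V PV by (auto simp: f'_def)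
    define h' where "h' = h(r := (\<lambda>x. c (f x)))"
    have lh': "\<forall>i<Suc r. linfun n (h' i)"
    proof (intro allI impI)
      fix i assume "i < Suc r"
      show "linfun n (h' i)"
      proof (cases "i = r")
        case True
        then show ?thesis unfolding h'_def linfun_def
          using linop_add[OF lf] linop_smult[OF lf] linop_carrier[OF lf]
            linfun_add[OF lc] linfun_smult[OF lc] by auto
      next
        case False
        then show ?thesis using lh \<open>i < Suc r\<close> by (simp add: h'_def)
      qed
    qed
    have obs': "\<forall>w\<in>V'. (\<forall>k. \<forall>i<Suc r. h' i ((f' ^^ k) w) = 0) \<longrightarrow> w = 0\<^sub>v n"
    proof (intro ballI impI)
      fix w assume wV: "w \<in> V'" and H: "\<forall>k. \<forall>i<Suc r. h' i ((f' ^^ k) w) = 0"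
      have wV0: "w \<in> V" using wV V'V by auto
      have eq: "(f' ^^ j) w = (f ^^ j) w" for j
      proof (induction j)
        case 0 then show ?case by simp
      next
        case (Suc j)
        have "c (f ((f ^^ j) w)) = 0" proof -
          have "h' r ((f' ^^ j) w) = 0" using H by blast
          then show ?thesis using Suc by (simp add: h'_def)
        qed
        moreover have "f ((f ^^ j) w) \<in> carrier_vec n" using fkV[OF wV0, of "Suc j"] VC by simp
        ultimately show ?case using Suc add_zero_smult[OF _ sC] by (simp add: f'_def P_def)
      qed
      have "\<forall>k. \<forall>i<r. h i ((f ^^ k) w) = 0"
      proof (intro allI impI)
        fix k i assume "i < r"
        then have "h' i ((f' ^^ k) w) = 0" using H by simp
        then show "h i ((f ^^ k) w) = 0" using eq \<open>i < r\<close> by (simp add: h'_def)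
      qed
      then show "w = 0\<^sub>v n" using obs wV0 by blast
    qed
    obtain \<alpha> where alpha: "s = vsum n (\<lambda>i. \<alpha> i \<cdot>\<^sub>v bs i) I"
      using sV Suc.prems(5) by (auto simp: spanset_def)
    have bsC: "\<forall>i\<in>I. bs i \<in> carrier_vec n" using Suc.prems(4) VC by auto
    have csum: "c s = (\<Sum>i\<in>I. \<alpha> i * c (bs i))"
      unfolding alpha using linfun_vsum[OF lc Suc.prems(2), of "\<lambda>i. \<alpha> i \<cdot>\<^sub>v bs i"]
        linfun_smult[OF lc] bsC by simp
    obtain j where j: "j \<in> I" "\<alpha> j \<noteq> 0"
    proof -
      have "\<exists>j\<in>I. \<alpha> j \<noteq> 0"
      proof (rule ccontr)
        assume "\<not> ?thesis"
        then have "(\<Sum>i\<in>I. \<alpha> i * c (bs i)) = 0" by simp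
        then show False using csum cs by simp
      qed
      then show ?thesis using that by blast
    qed
    define bs' where "bs' = (\<lambda>i. P (bs i))"
    define I' where "I' = I - {j}"
    have finI': "finite I'" using Suc.prems(2) by (simp add: I'_def)
    have cardI': "card I' \<le> k" using Suc.prems(1,2) j(1) by (simp add: I'_def)
    have bs'V: "bs' ` I' \<subseteq> V'" using Suc.prems(4) PV by (auto simp: bs'_def I'_def)
    have span': "V' \<subseteq> spanset n bs' I'"
    proof
      fix x assume xV: "x \<in> V'"
      then have xV0: "x \<in> V" and cx: "c x = 0" by (auto simp: V'_def)
      obtain \<beta> where beta: "x = vsum n (\<lambda>i. \<beta> i \<cdot>\<^sub>v bs i) I"
        using xV0 Suc.prems(5) by (auto simp: spanset_def)
      have cx2: "c x = (\<Sum>i\<in>I. \<beta> i * c (bs i))"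
        unfolding beta using linfun_vsum[OF lc Suc.prems(2), of "\<lambda>i. \<beta> i \<cdot>\<^sub>v bs i"]
          linfun_smult[OF lc] bsC by simp
      define \<gamma> where "\<gamma> = (\<lambda>i. \<beta> i - \<beta> j * \<alpha> i / \<alpha> j)"
      have "x = vsum n (\<lambda>i. \<gamma> i \<cdot>\<^sub>v bs' i) I'"
      proof (rule carrier_eqI)
        show "x \<in> carrier_vec n" using VC xV0 by auto
        show "vsum n (\<lambda>i. \<gamma> i \<cdot>\<^sub>v bs' i) I' \<in> carrier_vec n" by simp
        fix a assume a: "a < n"
        define X where "X = (\<lambda>i. bs i $ a - c (bs i) * s $ a)"
        have bs'a: "\<And>i. i \<in> I \<Longrightarrow> bs' i $ a = X i"
          using bsC a sC by (auto simp: bs'_def P_def X_def)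
        have xa: "x $ a = (\<Sum>i\<in>I. \<beta> i * bs i $ a)" using a bsC by (auto simp: beta intro!: sum.cong)
        have sa: "s $ a = (\<Sum>i\<in>I. \<alpha> i * bs i $ a)" using a bsC by (auto simp: alpha intro!: sum.cong)
        have SX\<beta>: "(\<Sum>i\<in>I. \<beta> i * X i) = x $ a"
        proof -
          have "(\<Sum>i\<in>I. \<beta> i * X i) = (\<Sum>i\<in>I. \<beta> i * bs i $ a) - (\<Sum>i\<in>I. \<beta> i * c (bs i)) * s $ a"
            unfolding X_def by (simp add: right_diff_distrib sum_subtractf sum_distrib_left sum_distrib_right ac_simps)
          then show ?thesis using xa cx2 cx by simp
        qed
        have SX\<alpha>: "(\<Sum>i\<in>I. \<alpha> i * X i) = 0"
        proof -
          have "(\<Sum>i\<in>I. \<alpha> i * X i) = (\<Sum>i\<in>I. \<alpha> i * bs i $ a) - (\<Sum>i\<in>I. \<alpha> i * c (bs i)) * s $ a"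
            unfolding X_def by (simp add: right_diff_distrib sum_subtractf sum_distrib_left sum_distrib_right ac_simps)
          then show ?thesis using sa csum cs by simp
        qed
        have "(\<Sum>i\<in>I. \<gamma> i * X i) = (\<Sum>i\<in>I. \<beta> i * X i) - \<beta> j / \<alpha> j * (\<Sum>i\<in>I. \<alpha> i * X i)"
          by (simp add: \<gamma>_def algebra_simps sum_subtractf sum_distrib_left)
        also have "\<dots> = x $ a" using SX\<alpha> SX\<beta> by simp
        finally have "(\<Sum>i\<in>I. \<gamma> i * X i) = x $ a" .
        moreover have "(\<Sum>i\<in>I. \<gamma> i * X i) = \<gamma> j * X j + (\<Sum>i\<in>I'. \<gamma> i * X i)"
          using j(1) Suc.prems(2) by (simp add: I'_def sum.remove)
        moreover have "\<gamma> j = 0" using j(2) by (simp add: \<gamma>_def)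
        ultimately have "x $ a = (\<Sum>i\<in>I'. \<gamma> i * X i)" by simp
        also have "\<dots> = vsum n (\<lambda>i. \<gamma> i \<cdot>\<^sub>v bs' i) I' $ a"
        proof -
          have "\<And>i. i \<in> I' \<Longrightarrow> (\<gamma> i \<cdot>\<^sub>v bs' i) $ a = \<gamma> i * X i"
          proof -
            fix i assume i: "i \<in> I'"
            then have "bs' i \<in> carrier_vec n" using bsC PC by (auto simp: I'_def bs'_def)
            then show "(\<gamma> i \<cdot>\<^sub>v bs' i) $ a = \<gamma> i * X i" using a bs'a i by (auto simp: I'_def)
          qed
          then show ?thesis using a by simp
        qed
        finally show "x $ a = vsum n (\<lambda>i. \<gamma> i \<cdot>\<^sub>v bs' i) I' $ a" .
      qed
      then show "x \<in> spanset n bs' I'" by (auto simp: spanset_def)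
    qed
    obtain ls' m where ls'V: "\<forall>i<Suc r. ls' i \<in> V'"
      and nil: "\<forall>w\<in>V'. ((\<lambda>e. f' e - vsum n (\<lambda>i. h' i e \<cdot>\<^sub>v ls' i) {..<Suc r}) ^^ m) w = 0\<^sub>v n"
      using Suc.IH[OF cardI' finI' sub' bs'V span' lf' f'V lh' obs'] by blast
    define Nf where "Nf = (\<lambda>e. f' e - vsum n (\<lambda>i. h' i e \<cdot>\<^sub>v ls' i) {..<Suc r})"
    have nil': "\<forall>w\<in>V'. (Nf ^^ m) w = 0\<^sub>v n" using nil by (simp add: Nf_def)
    have ls'V0: "\<And>i. i < Suc r \<Longrightarrow> ls' i \<in> V" using ls'V V'V by auto
    have ls'C: "\<forall>i\<in>{..<Suc r}. ls' i \<in> carrier_vec n" using ls'V0 VC by auto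
    have ls'C2: "\<forall>i\<in>{..<r}. ls' i \<in> carrier_vec n" using ls'C by auto
    have cl': "\<And>i. i < Suc r \<Longrightarrow> c (ls' i) = 0" using ls'V by (auto simp: V'_def)
    define q where "q = s + ls' r"
    have qV: "q \<in> V" using subsp_add[OF sub sV ls'V0[of r]] by (simp add: q_def)
    have qC: "q \<in> carrier_vec n" using VC qV by auto
    have cq: "c q = 1" using linfun_add[OF lc sC] ls'C cl'[of r] cs by (simp add: q_def)
    have fC: "\<And>x. x \<in> carrier_vec n \<Longrightarrow> f x \<in> carrier_vec n" using linop_carrier[OF lf] .
    define g where "g = f q - vsum n (\<lambda>i. h i q \<cdot>\<^sub>v ls' i) {..<r}"
    have gV: "g \<in> V"
    proof -
      have "f q \<in> V" using fV qV by auto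
      moreover have "vsum n (\<lambda>i. h i q \<cdot>\<^sub>v ls' i) {..<r} \<in> V"
        by (intro subsp_vsum[OF sub]) (auto intro!: subsp_smult[OF sub] ls'V0)
      ultimately show ?thesis using subsp_minus[OF sub] by (simp add: g_def)
    qed
    have gC: "g \<in> carrier_vec n" using VC gV by auto
    define ls where "ls = (\<lambda>i. ls' i + (if i = i0 then g else 0\<^sub>v n))"
    have lsV: "\<forall>i<r. ls i \<in> V"
    proof (intro allI impI)
      fix i assume "i < r"
      then have "ls' i \<in> V" using ls'V0 by auto
      then show "ls i \<in> V" using subsp_add[OF sub _ gV] VC by (auto simp: ls_def)
    qed
    have lsC: "\<forall>i\<in>{..<r}. ls i \<in> carrier_vec n" using lsV VC by auto
    have lsa: "\<And>i a. i < r \<Longrightarrow> a < n \<Longrightarrow> ls i $ a = ls' i $ a + (if i = i0 then g $ a else 0)"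
      using gC ls'C by (auto simp: ls_def)
    define Mf where "Mf = (\<lambda>e. f e - vsum n (\<lambda>i. h i e \<cdot>\<^sub>v ls i) {..<r})"
    define R where "R = (\<lambda>w. f w - vsum n (\<lambda>i. h i w \<cdot>\<^sub>v ls' i) {..<r})"
    define \<phi> where "\<phi> = (\<lambda>e. e + (- c e) \<cdot>\<^sub>v q)"
    have \<phi>V: "\<And>e. e \<in> V \<Longrightarrow> \<phi> e \<in> V'"
    proof -
      fix e assume e: "e \<in> V"
      have "\<phi> e \<in> V" using subsp_add[OF sub e subsp_smult[OF sub qV]] by (simp add: \<phi>_def)
      moreover have "c (\<phi> e) = 0" using linfun_add[OF lc] linfun_smult[OF lc] VC[OF e] qC cq
        by (simp add: \<phi>_def)
      ultimately show "\<phi> e \<in> V'" by (simp add: V'_def)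
    qed
    have lhr: "\<And>i. i < r \<Longrightarrow> linfun n (h i)" using lh by auto
    have b1: "\<And>e. e \<in> V \<Longrightarrow> Mf e = R (\<phi> e)"
    proof -
      fix e assume e: "e \<in> V"
      define w where "w = \<phi> e"
      have eC: "e \<in> carrier_vec n" using VC e by auto
      have wC: "w \<in> carrier_vec n" using \<phi>V[OF e] VC V'V by (auto simp: w_def)
      have cw: "c w = 0" using \<phi>V[OF e] by (simp add: w_def V'_def)
      have ew: "e = w + c e \<cdot>\<^sub>v q" using eC qC by (intro eq_vecI) (auto simp: w_def \<phi>_def)
      have fe: "f e = f w + c e \<cdot>\<^sub>v f q"
        using ew linop_add[OF lf wC] linop_smult[OF lf qC] qC by (metis smult_carrier_vec)
      have he: "\<And>i. i < r \<Longrightarrow> h i e = h i w + c e * h i q"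
        using ew linfun_add[OF lhr wC] linfun_smult[OF lhr qC] qC by (metis smult_carrier_vec)
      have hi0: "h i0 e = c e" by (simp add: c_def)
      show "Mf e = R w"
      proof (rule carrier_eqI)
        show "Mf e \<in> carrier_vec n" using fC[OF eC] by (simp add: Mf_def)
        show "R w \<in> carrier_vec n" using fC[OF wC] by (simp add: R_def)
        fix a assume a: "a < n"
        have s1: "(\<Sum>i<r. h i e * ls i $ a) = (\<Sum>i<r. h i e * ls' i $ a) + h i0 e * g $ a"
        proof -
          have "(\<Sum>i<r. h i e * ls i $ a) = (\<Sum>i<r. h i e * ls' i $ a + (if i = i0 then h i e * g $ a else 0))"
            using lsa a by (auto intro!: sum.cong simp: algebra_simps)
          also have "\<dots> = (\<Sum>i<r. h i e * ls' i $ a) + h i0 e * g $ a"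
            using u(2) by (simp add: sum.distrib)
          finally show ?thesis .
        qed
        have s2: "(\<Sum>i<r. h i e * ls' i $ a) = (\<Sum>i<r. h i w * ls' i $ a) + c e * (\<Sum>i<r. h i q * ls' i $ a)"
          using he by (simp add: sum.distrib sum_distrib_left algebra_simps)
        have ga: "g $ a = f q $ a - (\<Sum>i<r. h i q * ls' i $ a)"
          using a ls'C2 fC[OF qC] by (simp add: g_def vsum_smult_index del: index_vsum)
        have fea: "f e $ a = f w $ a + c e * f q $ a" using fe a fC[OF qC] fC[OF wC] by simp
        have "Mf e $ a = f e $ a - (\<Sum>i<r. h i e * ls i $ a)"
          using a lsC fC[OF eC] by (simp add: Mf_def vsum_smult_index del: index_vsum)
        also have "\<dots> = f w $ a - (\<Sum>i<r. h i w * ls' i $ a)"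
          unfolding s1 s2 ga fea hi0 by (simp add: algebra_simps)
        also have "\<dots> = R w $ a"
          using a ls'C2 fC[OF wC] by (simp add: R_def vsum_smult_index del: index_vsum)
        finally show "Mf e $ a = R w $ a" .
      qed
    qed
    have b2: "\<And>w. w \<in> V' \<Longrightarrow> Nf w + c (f w) \<cdot>\<^sub>v q = R w"
    proof -
      fix w assume w: "w \<in> V'"
      have wC: "w \<in> carrier_vec n" using w VC V'V by auto
      show "Nf w + c (f w) \<cdot>\<^sub>v q = R w"
      proof (rule carrier_eqI)
        show "Nf w + c (f w) \<cdot>\<^sub>v q \<in> carrier_vec n" using qC linop_carrier[OF lf' wC] by (simp add: Nf_def)
        show "R w \<in> carrier_vec n" using fC[OF wC] by (simp add: R_def)
        fix a assume a: "a < n"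
        have "(\<Sum>i<Suc r. h' i w * ls' i $ a) = (\<Sum>i<r. h i w * ls' i $ a) + c (f w) * ls' r $ a"
          by (simp add: h'_def)
        moreover have "f' w $ a = f w $ a - c (f w) * s $ a"
          using a sC fC[OF wC] by (simp add: f'_def P_def)
        moreover have "q $ a = s $ a + ls' r $ a" using a sC ls'C[rule_format, of r] by (simp add: q_def)
        moreover have "(Nf w + c (f w) \<cdot>\<^sub>v q) $ a = f' w $ a - (\<Sum>i<Suc r. h' i w * ls' i $ a) + c (f w) * q $ a"
          using a ls'C qC by (simp add: Nf_def vsum_smult_index del: index_vsum)
        moreover have "R w $ a = f w $ a - (\<Sum>i<r. h i w * ls' i $ a)"
          using a ls'C2 fC[OF wC] by (simp add: R_def vsum_smult_index del: index_vsum)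
        ultimately show "(Nf w + c (f w) \<cdot>\<^sub>v q) $ a = R w $ a" by (simp add: algebra_simps)
      qed
    qed
    have cN: "\<And>w. w \<in> V' \<Longrightarrow> Nf w \<in> V'"
    proof -
      fix w assume w: "w \<in> V'"
      have "f' w \<in> V'" using f'V w by auto
      moreover have "vsum n (\<lambda>i. h' i w \<cdot>\<^sub>v ls' i) {..<Suc r} \<in> V'"
        by (intro subsp_vsum[OF sub']) (auto intro!: subsp_smult[OF sub'] ls'V[rule_format])
      ultimately show "Nf w \<in> V'" using subsp_minus[OF sub'] by (simp add: Nf_def)
    qed
    have MR: "\<And>e. e \<in> V \<Longrightarrow> Mf e = Nf (\<phi> e) + c (f (\<phi> e)) \<cdot>\<^sub>v q"
      using b1 b2 \<phi>V by simp
    have dM: "\<And>e. e \<in> V \<Longrightarrow> Mf e \<in> V"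
      using MR cN \<phi>V V'V subsp_add[OF sub] subsp_smult[OF sub qV] by (metis subsetD)
    have eM: "\<And>e. e \<in> V \<Longrightarrow> \<phi> (Mf e) = Nf (\<phi> e)"
    proof -
      fix e assume e: "e \<in> V"
      define X where "X = Nf (\<phi> e)"
      define t where "t = c (f (\<phi> e))"
      have XV: "X \<in> V'" using cN \<phi>V e by (simp add: X_def)
      have XC: "X \<in> carrier_vec n" using XV V'V VC by auto
      have cX: "c X = 0" using XV by (simp add: V'_def)
      have Me: "Mf e = X + t \<cdot>\<^sub>v q" using MR[OF e] by (simp add: X_def t_def)
      have cM: "c (Mf e) = t" using Me linfun_add[OF lc XC] linfun_smult[OF lc qC] cX cq qC
        by simp
      show "\<phi> (Mf e) = X" unfolding \<phi>_def cM using XC qC Me by (intro eq_vecI) auto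
    qed
    have fM: "\<And>e. e \<in> V \<Longrightarrow> \<phi> e = 0\<^sub>v n \<Longrightarrow> Mf e = 0\<^sub>v n"
    proof -
      fix e assume e: "e \<in> V" and pe: "\<phi> e = 0\<^sub>v n"
      have "R (0\<^sub>v n) = 0\<^sub>v n"
      proof (rule carrier_eqI)
        show "R (0\<^sub>v n) \<in> carrier_vec n" by (simp add: R_def fC)
        show "0\<^sub>v n \<in> carrier_vec n" by simp
        fix a assume a: "a < n"
        show "R (0\<^sub>v n) $ a = 0\<^sub>v n $ a"
          using a ls'C2 linop_zero[OF lf] linfun_zero[OF lhr] by (simp add: R_def vsum_smult_index del: index_vsum)
      qed
      then show "Mf e = 0\<^sub>v n" using b1[OF e] pe by simp
    qed
    have it: "\<And>e. e \<in> V \<Longrightarrow> (Mf ^^ j) e \<in> V \<and> \<phi> ((Mf ^^ j) e) = (Nf ^^ j) (\<phi> e)" for j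
    proof (induction j)
      case 0 then show ?case by simp
    next
      case (Suc j)
      then show ?case using dM eM by simp
    qed
    show ?thesis
    proof (intro exI conjI)
      show "\<forall>i<r. ls i \<in> V" using lsV .
      show "\<forall>w\<in>V. ((\<lambda>e. f e - vsum n (\<lambda>i. h i e \<cdot>\<^sub>v ls i) {..<r}) ^^ Suc m) w = 0\<^sub>v n"
      proof
        fix w assume w: "w \<in> V"
        have "\<phi> ((Mf ^^ m) w) = 0\<^sub>v n" using it[OF w] nil' \<phi>V[OF w] by simp
        then have "Mf ((Mf ^^ m) w) = 0\<^sub>v n" using fM it[OF w] by blast
        then show "((\<lambda>e. f e - vsum n (\<lambda>i. h i e \<cdot>\<^sub>v ls i) {..<r}) ^^ Suc m) w = 0\<^sub>v n"
          by (simp add: Mf_def)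
      qed
    qed
  qed
qed





lemma funpow_cong_on: "(\<forall>x\<in>S. F x = G x) \<Longrightarrow> (\<forall>x\<in>S. F x \<in> S) \<Longrightarrow> x \<in> S \<Longrightarrow> (F^^m) x = (G^^m) x"
proof (induction m arbitrary: x)
  case 0 then show ?case by simp
next
  case (Suc m)
  have "(F^^Suc m) x = (F^^m) (F x)" by (simp add: funpow_Suc_right del: funpow.simps)
  also have "\<dots> = (G^^m) (F x)" using Suc by blast
  also have "\<dots> = (G^^Suc m) x" using Suc by (simp add: funpow_Suc_right del: funpow.simps)
  finally show ?case .
qed

lemma mat_vec_index_sum: "M \<in> carrier_mat m n \<Longrightarrow> v \<in> carrier_vec n \<Longrightarrow> a < m \<Longrightarrow>
   (M *\<^sub>v v) $ a = (\<Sum>c<n. M $$ (a, c) * v $ c)"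
  by (simp add: scalar_prod_def atLeast0LessThan)

lemma pow_apply: assumes "A \<in> carrier_mat n n" "w \<in> carrier_vec n"
  shows "((\<lambda>v. A *\<^sub>v v) ^^ k) w = (A ^\<^sub>m k) *\<^sub>v w"
  using assms(2)
proof (induction k arbitrary: w)
  case 0 then show ?case using assms by simp
next
  case (Suc k)
  have "((\<lambda>v. A *\<^sub>v v) ^^ Suc k) w = ((\<lambda>v. A *\<^sub>v v) ^^ k) (A *\<^sub>v w)"
    by (simp add: funpow_Suc_right del: funpow.simps)
  also have "\<dots> = (A ^\<^sub>m k) *\<^sub>v (A *\<^sub>v w)" using Suc assms by simp
  also have "\<dots> = (A ^\<^sub>m Suc k) *\<^sub>v w"
    using assoc_mult_mat_vec[OF pow_carrier_mat[OF assms(1)] assms(1) Suc.prems, of k] by simp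
  finally show ?case .
qed

lemma deadbeat_mat:
  fixes A C :: "real mat"
  assumes A: "A \<in> carrier_mat n n" and C: "C \<in> carrier_mat r n" and ob: "observable A C"
  shows "\<exists>L\<in>carrier_mat n r. \<exists>m. \<forall>e\<in>carrier_vec n. ((\<lambda>e. (A - L * C) *\<^sub>v e) ^^ m) e = 0\<^sub>v n"
proof -
  define f where "f = (\<lambda>v. A *\<^sub>v v)"
  define h where "h = (\<lambda>i v. (C *\<^sub>v v) $ i)"
  have sub: "subsp n (carrier_vec n)" by (auto simp: subsp_def)
  have span: "carrier_vec n \<subseteq> spanset n (unit_vec n) {..<n}"
  proof
    fix x :: "real vec" assume x: "x \<in> carrier_vec n"
    have "x = vsum n (\<lambda>i. x $ i \<cdot>\<^sub>v unit_vec n i) {..<n}"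
    proof (rule carrier_eqI[OF x vsum_carrier])
      fix a assume a: "a < n"
      have "(\<Sum>q<n. (x $ q \<cdot>\<^sub>v unit_vec n q) $ a) = (\<Sum>q<n. if q = a then x $ a else 0)"
        using a by (intro sum.cong) auto
      then show "x $ a = vsum n (\<lambda>i. x $ i \<cdot>\<^sub>v unit_vec n i) {..<n} $ a" using a by simp
    qed
    then show "x \<in> spanset n (unit_vec n) {..<n}" by (auto simp: spanset_def)
  qed
  have lf: "linop n f" unfolding linop_def f_def
    using A by (auto simp: mult_add_distrib_mat_vec mult_mat_vec)
  have lh: "\<forall>i<r. linfun n (h i)" unfolding linfun_def h_def
    using C by (auto simp: mult_add_distrib_mat_vec mult_mat_vec)
  have obs: "\<forall>w\<in>carrier_vec n. (\<forall>k. \<forall>i<r. h i ((f ^^ k) w) = 0) \<longrightarrow> w = 0\<^sub>v n"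
  proof (intro ballI impI)
    fix w :: "real vec" assume w: "w \<in> carrier_vec n" and H: "\<forall>k. \<forall>i<r. h i ((f ^^ k) w) = 0"
    have "\<forall>k. C *\<^sub>v ((A ^\<^sub>m k) *\<^sub>v w) = 0\<^sub>v (dim_row C)"
    proof
      fix k
      show "C *\<^sub>v ((A ^\<^sub>m k) *\<^sub>v w) = 0\<^sub>v (dim_row C)"
      proof (rule eq_vecI)
        fix i assume "i < dim_vec (0\<^sub>v (dim_row C) :: real vec)"
        then have i: "i < r" using C by simp
        have "h i ((f ^^ k) w) = 0" using H i by blast
        then show "(C *\<^sub>v ((A ^\<^sub>m k) *\<^sub>v w)) $ i = 0\<^sub>v (dim_row C) $ i"
          using i C pow_apply[OF A w, of k] by (simp add: h_def f_def)
      qed (use C in simp)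
    qed
    then show "w = 0\<^sub>v n" using ob w A unfolding observable_def by auto
  qed
  obtain ls m where lsV: "\<forall>i<r. ls i \<in> carrier_vec n"
    and nil: "\<forall>w\<in>carrier_vec n. ((\<lambda>e. f e - vsum n (\<lambda>i. h i e \<cdot>\<^sub>v ls i) {..<r}) ^^ m) w = 0\<^sub>v n"
  proof -
    have u: "unit_vec n ` {..<n} \<subseteq> carrier_vec n" by auto
    have fc: "f ` carrier_vec n \<subseteq> carrier_vec n" using A by (auto simp: f_def)
    have cI: "card {..<n} \<le> n" by simp
    show ?thesis using deadbeat_gen[OF cI finite_lessThan sub u span lf fc lh obs] that by blast
  qed
  define L where "L = mat n r (\<lambda>(a, i). ls i $ a)"
  have L: "L \<in> carrier_mat n r" by (simp add: L_def)
  have eqf: "\<forall>e\<in>carrier_vec n. (A - L * C) *\<^sub>v e = f e - vsum n (\<lambda>i. h i e \<cdot>\<^sub>v ls i) {..<r}"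
  proof
    fix e :: "real vec" assume e: "e \<in> carrier_vec n"
    have LC: "L * C \<in> carrier_mat n n" using L C by simp
    have Ce: "C *\<^sub>v e \<in> carrier_vec r" using C e by simp
    have "(A - L * C) *\<^sub>v e = A *\<^sub>v e - L *\<^sub>v (C *\<^sub>v e)"
      using minus_mult_distrib_mat_vec[OF A LC e] assoc_mult_mat_vec[OF L C e] by simp
    also have "A *\<^sub>v e - L *\<^sub>v (C *\<^sub>v e) = f e - vsum n (\<lambda>i. h i e \<cdot>\<^sub>v ls i) {..<r}"
    proof (rule carrier_eqI)
      have d: "dim_vec (L *\<^sub>v (C *\<^sub>v e)) = n" using L by simp
      show "A *\<^sub>v e - L *\<^sub>v (C *\<^sub>v e) \<in> carrier_vec n" by (rule carrier_vecI) (use d in simp)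
      show "f e - vsum n (\<lambda>i. h i e \<cdot>\<^sub>v ls i) {..<r} \<in> carrier_vec n" by (rule carrier_vecI) simp
      fix a assume a: "a < n"
      have "(L *\<^sub>v (C *\<^sub>v e)) $ a = (\<Sum>i<r. L $$ (a, i) * (C *\<^sub>v e) $ i)"
        by (rule mat_vec_index_sum[OF L Ce a])
      also have "\<dots> = (\<Sum>i<r. h i e * ls i $ a)"
        using a by (intro sum.cong) (simp_all add: L_def h_def)
      also have "\<dots> = vsum n (\<lambda>i. h i e \<cdot>\<^sub>v ls i) {..<r} $ a"
        using a lsV by (simp add: vsum_smult_index del: index_vsum)
      finally have X: "(L *\<^sub>v (C *\<^sub>v e)) $ a = vsum n (\<lambda>i. h i e \<cdot>\<^sub>v ls i) {..<r} $ a" .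
      have Y: "(A *\<^sub>v e - L *\<^sub>v (C *\<^sub>v e)) $ a = (A *\<^sub>v e) $ a - (L *\<^sub>v (C *\<^sub>v e)) $ a"
        using a d by simp
      have Z: "(f e - vsum n (\<lambda>i. h i e \<cdot>\<^sub>v ls i) {..<r}) $ a = f e $ a - vsum n (\<lambda>i. h i e \<cdot>\<^sub>v ls i) {..<r} $ a"
        using a by (simp del: index_vsum)
      show "(A *\<^sub>v e - L *\<^sub>v (C *\<^sub>v e)) $ a = (f e - vsum n (\<lambda>i. h i e \<cdot>\<^sub>v ls i) {..<r}) $ a"
        unfolding Y Z X by (simp add: f_def)
    qed
    finally show "(A - L * C) *\<^sub>v e = f e - vsum n (\<lambda>i. h i e \<cdot>\<^sub>v ls i) {..<r}" .
  qed
  have ALC: "A - L * C \<in> carrier_mat n n" using A L C minus_carrier_mat[of "L * C" n n A] by simp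
  have cl: "\<forall>e\<in>carrier_vec n. (A - L * C) *\<^sub>v e \<in> carrier_vec n" using ALC by simp
  show ?thesis
  proof (intro bexI[OF _ L] exI ballI)
    fix e :: "real vec" assume e: "e \<in> carrier_vec n"
    have "((\<lambda>e. (A - L * C) *\<^sub>v e) ^^ m) e = ((\<lambda>e. f e - vsum n (\<lambda>i. h i e \<cdot>\<^sub>v ls i) {..<r}) ^^ m) e"
      by (rule funpow_cong_on[OF _ _ e]) (use eqf cl in auto)
    then show "((\<lambda>e. (A - L * C) *\<^sub>v e) ^^ m) e = 0\<^sub>v n" using nil e by simp
  qed
qed




lemma off_Suc: "off d (Suc j) = off d j + d j" by (simp add: off_def)
lemma off_0[simp]: "off d 0 = 0" by (simp add: off_def)

lemma off_mono: "j \<le> j' \<Longrightarrow> off d j \<le> off d j'"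
  unfolding off_def by (rule sum_mono2) auto

lemma blk_eq: assumes "off d j \<le> a" "a < off d (Suc j)" shows "blk d a = j"
  unfolding blk_def
proof (rule Least_equality)
  show "a < off d (Suc j)" by fact
  fix y assume y: "a < off d (Suc y)"
  show "j \<le> y"
  proof (rule ccontr)
    assume "\<not> j \<le> y"
    then have "Suc y \<le> j" by simp
    then have "off d (Suc y) \<le> off d j" by (rule off_mono)
    then show False using y assms(1) by simp
  qed
qed

lemma blk_ex: "a < off d N \<Longrightarrow> \<exists>j<N. off d j \<le> a \<and> a < off d (Suc j)"
proof (induction N)
  case 0 then show ?case by simp
next
  case (Suc N)
  show ?case
  proof (cases "a < off d N")
    case True then show ?thesis using Suc.IH by (meson less_SucI)
  next
    case False then show ?thesis using Suc.prems by auto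
  qed
qed

lemma blk_props: assumes "a < off d N"
  shows "blk d a < N" "off d (blk d a) \<le> a" "a < off d (blk d a) + d (blk d a)"
proof -
  obtain j where j: "j < N" "off d j \<le> a" "a < off d (Suc j)" using blk_ex[OF assms] by blast
  then have "blk d a = j" using blk_eq by blast
  then show "blk d a < N" "off d (blk d a) \<le> a" "a < off d (blk d a) + d (blk d a)"
    using j by (auto simp: off_Suc)
qed

lemma blk_off[simp]: "c < d q \<Longrightarrow> blk d (off d q + c) = q"
  by (rule blk_eq) (auto simp: off_Suc)

lemma sum_split_add: fixes x y :: nat and F :: "nat \<Rightarrow> 'a::comm_monoid_add" shows "(\<Sum>b<x+y. F b) = (\<Sum>b<x. F b) + (\<Sum>c<y. F (x + c))"
  by (induction y) (auto simp: add.assoc)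

lemma sum_blocks: "(\<Sum>b<off d N. F b) = (\<Sum>q<N. \<Sum>c<d q. F (off d q + c))"
  by (induction N) (auto simp: off_Suc sum_split_add)

definition sub :: "(nat \<Rightarrow> nat) \<Rightarrow> nat \<Rightarrow> real vec \<Rightarrow> real vec" where
  "sub d j v = vec (d j) (\<lambda>a. v $ (off d j + a))"

lemma sub_carrier[simp]: "sub d j v \<in> carrier_vec (d j)" by (simp add: sub_def)
lemma dim_sub[simp]: "dim_vec (sub d j v) = d j" by (simp add: sub_def)
lemma index_sub[simp]: "a < d j \<Longrightarrow> sub d j v $ a = v $ (off d j + a)" by (simp add: sub_def)

lemma blk_sum: fixes M :: "nat \<Rightarrow> real mat" and v :: "real vec" assumes "j < N"
  shows "(\<Sum>b<off d N. (if blk d b \<le> j then M (blk d b) $$ (a, b - off d (blk d b)) else 0) * v $ b)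
       = (\<Sum>q\<in>{..j}. \<Sum>c<d q. M q $$ (a, c) * v $ (off d q + c))"
proof -
  have "(\<Sum>b<off d N. (if blk d b \<le> j then M (blk d b) $$ (a, b - off d (blk d b)) else 0) * v $ b)
     = (\<Sum>q<N. \<Sum>c<d q. (if q \<le> j then M q $$ (a, c) else 0) * v $ (off d q + c))"
    unfolding sum_blocks by (intro sum.cong refl) auto
  also have "\<dots> = (\<Sum>q<N. if q \<in> {..j} then (\<Sum>c<d q. M q $$ (a, c) * v $ (off d q + c)) else 0)"
    by (intro sum.cong refl) auto
  also have "\<dots> = (\<Sum>q\<in>{..<N} \<inter> {..j}. \<Sum>c<d q. M q $$ (a, c) * v $ (off d q + c))"
    by (simp add: sum.inter_restrict)
  also have "{..<N} \<inter> {..j} = {..j}" using assms by auto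
  finally show ?thesis .
qed

lemma blk_block_mult: fixes M :: "nat \<Rightarrow> real mat" and v :: "real vec" assumes "j < N" "v \<in> carrier_vec (off d N)"
  and "\<forall>q\<le>j. M q \<in> carrier_mat m (d q)" and a: "a < m"
  shows "(\<Sum>b<off d N. (if blk d b \<le> j then M (blk d b) $$ (a, b - off d (blk d b)) else 0) * v $ b)
    = (M j *\<^sub>v sub d j v + vsum m (\<lambda>q. M q *\<^sub>v sub d q v) {..<j}) $ a"
proof -
  have "(\<Sum>b<off d N. (if blk d b \<le> j then M (blk d b) $$ (a, b - off d (blk d b)) else 0) * v $ b)
    = (\<Sum>q\<in>{..j}. (M q *\<^sub>v sub d q v) $ a)"
    unfolding blk_sum[OF assms(1)]
  proof (intro sum.cong refl)
    fix q assume "q \<in> {..j}"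
    then have Mq: "M q \<in> carrier_mat m (d q)" using assms(3) by simp
    show "(\<Sum>c<d q. M q $$ (a, c) * v $ (off d q + c)) = (M q *\<^sub>v sub d q v) $ a"
      using mat_vec_index_sum[OF Mq sub_carrier[of d q v] a] by simp
  qed
  also have "\<dots> = (M j *\<^sub>v sub d j v) $ a + (\<Sum>q<j. (M q *\<^sub>v sub d q v) $ a)"
    by (simp add: lessThan_Suc_atMost[symmetric])
  also have "\<dots> = (M j *\<^sub>v sub d j v + vsum m (\<lambda>q. M q *\<^sub>v sub d q v) {..<j}) $ a"
    using a assms(3) by simp
  finally show ?thesis .
qed

lemma Abar_sub: fixes Ab :: "nat \<Rightarrow> nat \<Rightarrow> real mat" assumes j: "j < N" and v: "v \<in> carrier_vec (off d N)"
  and Ab: "\<forall>j<N. \<forall>q\<le>j. Ab j q \<in> carrier_mat (d j) (d q)"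
  shows "sub d j (blk_lower_mat d N Ab *\<^sub>v v) = Ab j j *\<^sub>v sub d j v + vsum (d j) (\<lambda>q. Ab j q *\<^sub>v sub d q v) {..<j}"
proof (rule carrier_eqI)
  show "sub d j (blk_lower_mat d N Ab *\<^sub>v v) \<in> carrier_vec (d j)" by simp
  show "Ab j j *\<^sub>v sub d j v + vsum (d j) (\<lambda>q. Ab j q *\<^sub>v sub d q v) {..<j} \<in> carrier_vec (d j)" by (rule carrier_vecI) simp
  fix a assume a: "a < d j"
  have lt: "off d j + a < off d N"
    using off_mono[of "Suc j" N d] j a by (simp add: off_Suc)
  have Bc: "blk_lower_mat d N Ab \<in> carrier_mat (off d N) (off d N)" by (simp add: blk_lower_mat_def)
  have "sub d j (blk_lower_mat d N Ab *\<^sub>v v) $ a = (blk_lower_mat d N Ab *\<^sub>v v) $ (off d j + a)"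
    using a by simp
  also have "\<dots> = (\<Sum>b<off d N. blk_lower_mat d N Ab $$ (off d j + a, b) * v $ b)"
    by (rule mat_vec_index_sum[OF Bc v lt])
  also have "\<dots> = (\<Sum>b<off d N. (if blk d b \<le> j then Ab j (blk d b) $$ (a, b - off d (blk d b)) else 0) * v $ b)"
    using lt a by (intro sum.cong refl) (simp add: blk_lower_mat_def Let_def)
  also have "\<dots> = (Ab j j *\<^sub>v sub d j v + vsum (d j) (\<lambda>q. Ab j q *\<^sub>v sub d q v) {..<j}) $ a"
    by (rule blk_block_mult[OF j v _ a]) (use Ab j in auto)
  finally show "sub d j (blk_lower_mat d N Ab *\<^sub>v v) $ a = (Ab j j *\<^sub>v sub d j v + vsum (d j) (\<lambda>q. Ab j q *\<^sub>v sub d q v) {..<j}) $ a" .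
qed

lemma Crow_mult: fixes Cb :: "nat \<Rightarrow> real mat" assumes i: "i < N" and v: "v \<in> carrier_vec (off d N)"
  and Cb: "\<forall>q\<le>i. Cb q \<in> carrier_mat ri (d q)"
  shows "blk_row_mat d N ri i Cb *\<^sub>v v = Cb i *\<^sub>v sub d i v + vsum ri (\<lambda>q. Cb q *\<^sub>v sub d q v) {..<i}"
proof (rule carrier_eqI)
  have Bc: "blk_row_mat d N ri i Cb \<in> carrier_mat ri (off d N)" by (simp add: blk_row_mat_def)
  show "blk_row_mat d N ri i Cb *\<^sub>v v \<in> carrier_vec ri" by (rule carrier_vecI) (use Bc in simp)
  show "Cb i *\<^sub>v sub d i v + vsum ri (\<lambda>q. Cb q *\<^sub>v sub d q v) {..<i} \<in> carrier_vec ri" by (rule carrier_vecI) simp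
  fix a assume a: "a < ri"
  have "(blk_row_mat d N ri i Cb *\<^sub>v v) $ a = (\<Sum>b<off d N. blk_row_mat d N ri i Cb $$ (a, b) * v $ b)"
    by (rule mat_vec_index_sum[OF Bc v a])
  also have "\<dots> = (\<Sum>b<off d N. (if blk d b \<le> i then Cb (blk d b) $$ (a, b - off d (blk d b)) else 0) * v $ b)"
    using a by (intro sum.cong refl) (simp add: blk_row_mat_def Let_def)
  also have "\<dots> = (Cb i *\<^sub>v sub d i v + vsum ri (\<lambda>q. Cb q *\<^sub>v sub d q v) {..<i}) $ a"
    by (rule blk_block_mult[OF i v Cb a])
  finally show "(blk_row_mat d N ri i Cb *\<^sub>v v) $ a = (Cb i *\<^sub>v sub d i v + vsum ri (\<lambda>q. Cb q *\<^sub>v sub d q v) {..<i}) $ a" .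
qed

lemma stack_sub: assumes w: "w \<in> carrier_vec (off d N)" and zh: "\<forall>q<N. zh q = sub d q w"
  shows "stack_vec d N zh = w"
proof (rule eq_vecI)
  show "dim_vec (stack_vec d N zh) = dim_vec w" using w by (simp add: stack_vec_def)
  fix a assume "a < dim_vec w"
  then have a: "a < off d N" using w by simp
  note bp = blk_props[OF a]
  have "stack_vec d N zh $ a = zh (blk d a) $ (a - off d (blk d a))" using a by (simp add: stack_vec_def)
  also have "\<dots> = w $ a" using bp zh by simp
  finally show "stack_vec d N zh $ a = w $ a" .
qed




lemma rtrancl_exit: assumes "(x, y) \<in> R\<^sup>*" "x \<in> S" "y \<notin> S"
  shows "\<exists>a b. (a, b) \<in> R \<and> a \<in> S \<and> b \<notin> S"
  using assms
proof (induction rule: rtrancl_induct)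
  case base then show ?case by simp
next
  case (step y z)
  then show ?case by (cases "y \<in> S") auto
qed

lemma vsum_cong: "(\<And>q. q \<in> S \<Longrightarrow> F q = G q) \<Longrightarrow> vsum n F S = vsum n G S"
  by (simp add: vsum_def)

lemma mat_vsum: fixes M :: "real mat"
  assumes M: "M \<in> carrier_mat m n" and F: "\<forall>q\<in>S. F q \<in> carrier_vec n"
  shows "M *\<^sub>v vsum n F S = vsum m (\<lambda>q. M *\<^sub>v F q) S"
proof (rule carrier_eqI)
  show "M *\<^sub>v vsum n F S \<in> carrier_vec m" using M by simp
  show "vsum m (\<lambda>q. M *\<^sub>v F q) S \<in> carrier_vec m" by simp
  fix a assume a: "a < m"
  have "(M *\<^sub>v vsum n F S) $ a = (\<Sum>c<n. M $$ (a, c) * (\<Sum>q\<in>S. F q $ c))"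
    using mat_vec_index_sum[OF M vsum_carrier a] by simp
  also have "\<dots> = (\<Sum>q\<in>S. \<Sum>c<n. M $$ (a, c) * F q $ c)"
    by (simp add: sum_distrib_left sum.swap[of _ S])
  also have "\<dots> = (\<Sum>q\<in>S. (M *\<^sub>v F q) $ a)"
    using F mat_vec_index_sum[OF M _ a] by (intro sum.cong refl) simp
  also have "\<dots> = vsum m (\<lambda>q. M *\<^sub>v F q) S $ a" using a by simp
  finally show "(M *\<^sub>v vsum n F S) $ a = vsum m (\<lambda>q. M *\<^sub>v F q) S $ a" .
qed

lemma minus_zero_eq: fixes u v :: "real vec"
  assumes "u \<in> carrier_vec n" "v \<in> carrier_vec n" "u - v = 0\<^sub>v n" shows "u = v"
proof (rule eq_vecI)
  fix i assume "i < dim_vec v"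
  then have i: "i < n" using assms by simp
  have "(u - v) $ i = 0" using assms(3) i by simp
  then show "u $ i = v $ i" using assms(1,2) i by simp
qed (use assms in simp)

lemma vnorm_zero[simp]: "vnorm (0\<^sub>v n) = 0" by (simp add: vnorm_def)


theorem theorem1:
  fixes N :: nat and d r :: "nat \<Rightarrow> nat"
    and A T :: "real mat" and C :: "nat \<Rightarrow> real mat"
    and Ab Cb :: "nat \<Rightarrow> nat \<Rightarrow> real mat"
    and E :: "nat \<Rightarrow> (nat \<times> nat) set"
    and \<rho> :: real
  assumes N: "N \<ge> 1"
    and A_dim: "A \<in> carrier_mat (off d N) (off d N)"
    and C_dim: "\<forall>i<N. C i \<in> carrier_mat (r i) (off d N)"
    and obs: "observable A (vstack_mat r N (off d N) C)"
    and T_dim: "T \<in> carrier_mat (off d N) (off d N)"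
    and T_inv: "invertible_mat T"
    and Ab_dim: "\<forall>j<N. \<forall>q\<le>j. Ab j q \<in> carrier_mat (d j) (d q)"
    and Cb_dim: "\<forall>i<N. \<forall>q\<le>i. Cb i q \<in> carrier_mat (r i) (d q)"
    and A_blk: "A * T = T * blk_lower_mat d N Ab"
    and C_blk: "\<forall>i<N. C i * T = blk_row_mat d N (r i) i (Cb i)"
    and obs_blk: "\<forall>j<N. observable (Ab j j) (Cb j j)"
    and E_V: "\<forall>k. E k \<subseteq> {..<N} \<times> {..<N}"
    and graph: "graph_conditions N E"
    and rho: "0 < \<rho>" "\<rho> < 1"
  shows "\<exists>L :: nat \<Rightarrow> real mat. (\<forall>j<N. L j \<in> carrier_mat (d j) (r j)) \<and>
     (\<forall>(x :: nat \<Rightarrow> real vec) zh tau.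
        x 0 \<in> carrier_vec (off d N) \<longrightarrow>
        (\<forall>k. x (Suc k) = A *\<^sub>v x k) \<longrightarrow>
        alg_run N d Ab Cb L E (\<lambda>k j. C j *\<^sub>v x k) zh tau \<longrightarrow>
        (\<exists>c \<ge> 0. \<exists>K :: nat. \<forall>k\<ge>K. \<forall>i<N.
            vnorm (T *\<^sub>v stack_vec d N (zh k i) - x k) \<le> c * \<rho> ^ k))"
proof -
  define n where "n = off d N"
  define Abar where "Abar = blk_lower_mat d N Ab"
  have Abar_C: "Abar \<in> carrier_mat n n" by (simp add: Abar_def blk_lower_mat_def n_def)
  have dT: "dim_row T = n" using T_dim by (simp add: n_def)
  obtain Ti where TTi0: "T * Ti = 1\<^sub>m (dim_row T)" and TiT: "Ti * T = 1\<^sub>m (dim_row Ti)"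
    using T_inv unfolding invertible_mat_def inverts_mat_def by blast
  have TTi: "T * Ti = 1\<^sub>m n" using TTi0 dT by simp
  have Ti_C: "Ti \<in> carrier_mat n n"
  proof -
    have "dim_col (T * Ti) = n" using TTi by simp
    then have c: "dim_col Ti = n" by simp
    have "dim_col (Ti * T) = dim_row Ti" using TiT by simp
    then have "dim_row Ti = n" using T_dim by (simp add: n_def)
    then show ?thesis using c by auto
  qed
  have TiT': "Ti * T = 1\<^sub>m n" using TiT Ti_C by simp
  have TAT: "Ti * A * T = Abar"
  proof -
    have "Ti * A * T = Ti * (A * T)" using Ti_C A_dim T_dim by (simp add: n_def)
    also have "\<dots> = Ti * (T * Abar)" using A_blk by (simp add: Abar_def)
    also have "\<dots> = (Ti * T) * Abar" using Ti_C T_dim Abar_C by (simp add: n_def)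
    also have "\<dots> = Abar" using TiT' Abar_C by simp
    finally show ?thesis .
  qed
  have Lex: "\<forall>j\<in>{..<N}. \<exists>L. L \<in> carrier_mat (d j) (r j) \<and>
      (\<exists>m. \<forall>e\<in>carrier_vec (d j). ((\<lambda>e. (Ab j j - L * Cb j j) *\<^sub>v e) ^^ m) e = 0\<^sub>v (d j))"
  proof
    fix j assume "j \<in> {..<N}"
    then have j: "j < N" by simp
    have A': "Ab j j \<in> carrier_mat (d j) (d j)" using Ab_dim j by simp
    have C': "Cb j j \<in> carrier_mat (r j) (d j)" using Cb_dim j by simp
    show "\<exists>L. L \<in> carrier_mat (d j) (r j) \<and>
      (\<exists>m. \<forall>e\<in>carrier_vec (d j). ((\<lambda>e. (Ab j j - L * Cb j j) *\<^sub>v e) ^^ m) e = 0\<^sub>v (d j))"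
      using deadbeat_mat[OF A' C' obs_blk[rule_format, OF j]] by blast
  qed
  then obtain L where L: "\<forall>j\<in>{..<N}. L j \<in> carrier_mat (d j) (r j) \<and>
      (\<exists>m. \<forall>e\<in>carrier_vec (d j). ((\<lambda>e. (Ab j j - L j * Cb j j) *\<^sub>v e) ^^ m) e = 0\<^sub>v (d j))"
    using bchoice[OF Lex] by blast
  show ?thesis
  proof (rule exI[of _ L], rule conjI)
    show "\<forall>j<N. L j \<in> carrier_mat (d j) (r j)" using L by auto
  next
    show "\<forall>(x :: nat \<Rightarrow> real vec) zh tau.
        x 0 \<in> carrier_vec (off d N) \<longrightarrow>
        (\<forall>k. x (Suc k) = A *\<^sub>v x k) \<longrightarrow>
        alg_run N d Ab Cb L E (\<lambda>k j. C j *\<^sub>v x k) zh tau \<longrightarrow>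
        (\<exists>c \<ge> 0. \<exists>K :: nat. \<forall>k\<ge>K. \<forall>i<N.
            vnorm (T *\<^sub>v stack_vec d N (zh k i) - x k) \<le> c * \<rho> ^ k)"
    proof (intro allI impI)
    fix x :: "nat \<Rightarrow> real vec" and zh tau
    assume x0: "x 0 \<in> carrier_vec (off d N)" and xs: "\<forall>k. x (Suc k) = A *\<^sub>v x k"
      and alg: "alg_run N d Ab Cb L E (\<lambda>k j. C j *\<^sub>v x k) zh tau"
    note alg' = alg[unfolded alg_run_def]
    have carr: "\<forall>k. \<forall>i<N. \<forall>j<N. zh k i j \<in> carrier_vec (d j)" using alg' by blast
    have src: "\<forall>k. \<forall>j<N. tau k j j = Some 0 \<and>
       zh (Suc k) j j = (Ab j j - L j * Cb j j) *\<^sub>v zh k j j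
          + vsum (d j) (\<lambda>q. (Ab j q - L j * Cb j q) *\<^sub>v zh k j q) {..<j}
          + L j *\<^sub>v (C j *\<^sub>v x k)" using alg' by blast
    have nons: "\<forall>k. \<forall>i<N. \<forall>j<N. i \<noteq> j \<longrightarrow>
       (let M = {l. l < N \<and> l \<noteq> i \<and> (l, i) \<in> E k \<and> tau k l j \<noteq> None};
            F = (if tau k i j = None then M
                 else {l \<in> M. the (tau k l j) < the (tau k i j)});
            own = vsum (d j) (\<lambda>q. Ab j q *\<^sub>v zh k i q) {..<j} in
        (F \<noteq> {} \<longrightarrow>
           (\<exists>u\<in>F. (\<forall>l\<in>F. the (tau k u j) \<le> the (tau k l j)) \<and>
              tau (Suc k) i j = Some (Suc (the (tau k u j))) \<and>
              zh (Suc k) i j = Ab j j *\<^sub>v zh k u j + own)) \<and>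
        (F = {} \<longrightarrow>
           tau (Suc k) i j = map_option Suc (tau k i j) \<and>
           zh (Suc k) i j = Ab j j *\<^sub>v zh k i j + own))" using alg' by blast
    have xC: "\<And>k. x k \<in> carrier_vec n"
    proof -
      fix k show "x k \<in> carrier_vec n"
        by (induction k) (use x0 xs A_dim in \<open>auto simp: n_def\<close>)
    qed
    define z where "z = (\<lambda>k. Ti *\<^sub>v x k)"
    have zC: "\<And>k. z k \<in> carrier_vec n" by (rule carrier_vecI) (use Ti_C in \<open>simp add: z_def\<close>)
    have xz: "\<And>k. x k = T *\<^sub>v z k"
    proof -
      fix k
      have "T *\<^sub>v z k = (T * Ti) *\<^sub>v x k" using T_dim Ti_C xC[of k] by (simp add: z_def n_def)
      also have "\<dots> = x k" using TTi xC[of k] by simp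
      finally show "x k = T *\<^sub>v z k" by simp
    qed
    have zS: "\<And>k. z (Suc k) = Abar *\<^sub>v z k"
    proof -
      fix k
      have "z (Suc k) = Ti *\<^sub>v (A *\<^sub>v x k)" using xs by (simp add: z_def)
      also have "\<dots> = Ti *\<^sub>v (A *\<^sub>v (T *\<^sub>v z k))" by (subst xz[of k]) (rule refl)
      also have "\<dots> = (Ti * A * T) *\<^sub>v z k"
      proof -
        have AC: "A \<in> carrier_mat n n" and TC: "T \<in> carrier_mat n n" using A_dim T_dim by (auto simp: n_def)
        have TiA: "Ti * A \<in> carrier_mat n n" using Ti_C AC by simp
        have Tz: "T *\<^sub>v z k \<in> carrier_vec n" using TC zC[of k] by simp
        have "(Ti * A * T) *\<^sub>v z k = (Ti * A) *\<^sub>v (T *\<^sub>v z k)" by (rule assoc_mult_mat_vec[OF TiA TC zC])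
        also have "\<dots> = Ti *\<^sub>v (A *\<^sub>v (T *\<^sub>v z k))" by (rule assoc_mult_mat_vec[OF Ti_C AC Tz])
        finally show ?thesis by simp
      qed
      also have "\<dots> = Abar *\<^sub>v z k" using TAT by simp
      finally show "z (Suc k) = Abar *\<^sub>v z k" .
    qed
    have Cx: "\<And>j k. j < N \<Longrightarrow> C j *\<^sub>v x k = Cb j j *\<^sub>v sub d j (z k) + vsum (r j) (\<lambda>q. Cb j q *\<^sub>v sub d q (z k)) {..<j}"
    proof -
      fix j k assume j: "j < N"
      have Cj: "C j \<in> carrier_mat (r j) (off d N)" using C_dim j by simp
      have "C j *\<^sub>v x k = (C j * T) *\<^sub>v z k"
        using assoc_mult_mat_vec[OF Cj T_dim, of "z k"] zC[of k] xz[of k] by (simp add: n_def)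
      also have "\<dots> = blk_row_mat d N (r j) j (Cb j) *\<^sub>v z k" using C_blk j by simp
      also have "\<dots> = Cb j j *\<^sub>v sub d j (z k) + vsum (r j) (\<lambda>q. Cb j q *\<^sub>v sub d q (z k)) {..<j}"
        by (rule Crow_mult[OF j]) (use zC Cb_dim j in \<open>auto simp: n_def\<close>)
      finally show "C j *\<^sub>v x k = Cb j j *\<^sub>v sub d j (z k) + vsum (r j) (\<lambda>q. Cb j q *\<^sub>v sub d q (z k)) {..<j}" .
    qed
    have zsub: "\<And>j k. j < N \<Longrightarrow> sub d j (z (Suc k)) = Ab j j *\<^sub>v sub d j (z k) + vsum (d j) (\<lambda>q. Ab j q *\<^sub>v sub d q (z k)) {..<j}"
      unfolding zS Abar_def by (rule Abar_sub) (use zC Ab_dim in \<open>auto simp: n_def\<close>)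
    have step: "\<And>j K'. j < N \<Longrightarrow> (\<forall>k\<ge>K'. \<forall>i<N. \<forall>q<j. zh k i q = sub d q (z k)) \<Longrightarrow>
        \<exists>K. \<forall>k\<ge>K. \<forall>i<N. zh k i j = sub d j (z k)"
    proof -
      fix j K' assume j: "j < N" and low: "\<forall>k\<ge>K'. \<forall>i<N. \<forall>q<j. zh k i q = sub d q (z k)"
      have Ajj: "Ab j j \<in> carrier_mat (d j) (d j)" using Ab_dim j by simp
      have Cjj: "Cb j j \<in> carrier_mat (r j) (d j)" using Cb_dim j by simp
      have Lj: "L j \<in> carrier_mat (d j) (r j)" using L j by simp
      have Ajq: "\<And>q. q < j \<Longrightarrow> Ab j q \<in> carrier_mat (d j) (d q)" using Ab_dim j by simp
      have Cjq: "\<And>q. q < j \<Longrightarrow> Cb j q \<in> carrier_mat (r j) (d q)" using Cb_dim j by simp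
      obtain m where nil: "\<forall>e\<in>carrier_vec (d j). ((\<lambda>e. (Ab j j - L j * Cb j j) *\<^sub>v e) ^^ m) e = 0\<^sub>v (d j)"
        using L j by auto
      define Mf where "Mf = (\<lambda>e. (Ab j j - L j * Cb j j) *\<^sub>v e)"
      have LC: "L j * Cb j j \<in> carrier_mat (d j) (d j)" using Lj Cjj by simp
      have MM: "Ab j j - L j * Cb j j \<in> carrier_mat (d j) (d j)"
        using minus_carrier_mat[OF LC, of "Ab j j"] Ajj by simp
      have MfC: "\<And>e. e \<in> carrier_vec (d j) \<Longrightarrow> Mf e \<in> carrier_vec (d j)"
        using MM by (simp add: Mf_def)
      have MZ: "(Ab j j - L j * Cb j j) *\<^sub>v 0\<^sub>v (d j) = 0\<^sub>v (d j)"
        by (rule eq_vecI) (use MM mat_vec_index_sum[OF MM zero_carrier_vec] in auto)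
      have Mf0: "\<And>p. (Mf ^^ p) (0\<^sub>v (d j)) = 0\<^sub>v (d j)"
      proof -
        fix p show "(Mf ^^ p) (0\<^sub>v (d j)) = 0\<^sub>v (d j)"
          by (induction p) (use MZ in \<open>auto simp: Mf_def\<close>)
      qed
      define err where "err = (\<lambda>k. zh k j j - sub d j (z k))"
      have errC: "\<And>k. err k \<in> carrier_vec (d j)" by (rule carrier_vecI) (simp add: err_def)
      have rec: "\<And>k. K' \<le> k \<Longrightarrow> err (Suc k) = Mf (err k)"
      proof -
        fix k assume k: "K' \<le> k"
        have lowk: "\<And>q. q < j \<Longrightarrow> zh k j q = sub d q (z k)" using low k j by blast
        define sq where "sq = (\<lambda>q. sub d q (z k))"
        have CsqC: "\<And>q. q < j \<Longrightarrow> Cb j q *\<^sub>v sq q \<in> carrier_vec (r j)"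
        proof -
          fix q assume q: "q < j"
          show "Cb j q *\<^sub>v sq q \<in> carrier_vec (r j)"
            using mult_mat_vec_carrier[OF Cjq[OF q] sub_carrier[of d q "z k"]] by (simp add: sq_def)
        qed
        define eh where "eh = zh k j j"
        have ehC: "eh \<in> carrier_vec (d j)" using carr j by (simp add: eh_def)
        define VA where "VA = vsum (d j) (\<lambda>q. Ab j q *\<^sub>v sq q) {..<j}"
        define VC where "VC = vsum (r j) (\<lambda>q. Cb j q *\<^sub>v sq q) {..<j}"
        have S: "zh (Suc k) j j = (Ab j j - L j * Cb j j) *\<^sub>v eh
          + vsum (d j) (\<lambda>q. (Ab j q - L j * Cb j q) *\<^sub>v zh k j q) {..<j}
          + L j *\<^sub>v (C j *\<^sub>v x k)" using src j by (simp add: eh_def)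
        have V1: "vsum (d j) (\<lambda>q. (Ab j q - L j * Cb j q) *\<^sub>v zh k j q) {..<j} = VA - L j *\<^sub>v VC"
        proof (rule carrier_eqI)
          show "vsum (d j) (\<lambda>q. (Ab j q - L j * Cb j q) *\<^sub>v zh k j q) {..<j} \<in> carrier_vec (d j)" by simp
          show "VA - L j *\<^sub>v VC \<in> carrier_vec (d j)" by (rule carrier_vecI) (use Lj in simp)
          fix a assume a: "a < d j"
          have LV: "L j *\<^sub>v VC = vsum (d j) (\<lambda>q. L j *\<^sub>v (Cb j q *\<^sub>v sq q)) {..<j}"
            unfolding VC_def by (rule mat_vsum[OF Lj]) (use CsqC in auto)
          have "vsum (d j) (\<lambda>q. (Ab j q - L j * Cb j q) *\<^sub>v zh k j q) {..<j} $ a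
             = (\<Sum>q<j. ((Ab j q - L j * Cb j q) *\<^sub>v sq q) $ a)" using a lowk by (simp add: sq_def)
          also have "\<dots> = (\<Sum>q<j. (Ab j q *\<^sub>v sq q) $ a - (L j *\<^sub>v (Cb j q *\<^sub>v sq q)) $ a)"
          proof (intro sum.cong refl)
            fix q assume "q \<in> {..<j}"
            then have q: "q < j" by simp
            have LCq: "L j * Cb j q \<in> carrier_mat (d j) (d q)" using Lj Cjq[OF q] by simp
            have "(Ab j q - L j * Cb j q) *\<^sub>v sq q = Ab j q *\<^sub>v sq q - (L j * Cb j q) *\<^sub>v sq q"
              by (rule minus_mult_distrib_mat_vec[OF Ajq[OF q] LCq]) (simp add: sq_def)
            also have "(L j * Cb j q) *\<^sub>v sq q = L j *\<^sub>v (Cb j q *\<^sub>v sq q)"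
              by (rule assoc_mult_mat_vec[OF Lj Cjq[OF q]]) (simp add: sq_def)
            finally show "((Ab j q - L j * Cb j q) *\<^sub>v sq q) $ a = (Ab j q *\<^sub>v sq q) $ a - (L j *\<^sub>v (Cb j q *\<^sub>v sq q)) $ a"
              using a Lj by simp
          qed
          also have "\<dots> = (VA - L j *\<^sub>v VC) $ a"
            using a Lj unfolding LV by (simp add: VA_def sum_subtractf)
          finally show "vsum (d j) (\<lambda>q. (Ab j q - L j * Cb j q) *\<^sub>v zh k j q) {..<j} $ a = (VA - L j *\<^sub>v VC) $ a" .
        qed
        have Cxk: "C j *\<^sub>v x k = Cb j j *\<^sub>v sq j + VC" using Cx[OF j] by (simp add: sq_def VC_def)
        have zs: "sub d j (z (Suc k)) = Ab j j *\<^sub>v sq j + VA" using zsub[OF j] by (simp add: sq_def VA_def)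
        have sjC: "sq j \<in> carrier_vec (d j)" by (simp add: sq_def)
        have CsC: "Cb j j *\<^sub>v sq j \<in> carrier_vec (r j)" using Cjj sjC by simp
        have LCxk: "L j *\<^sub>v (C j *\<^sub>v x k) = L j *\<^sub>v (Cb j j *\<^sub>v sq j) + L j *\<^sub>v VC"
          unfolding Cxk by (rule mult_add_distrib_mat_vec[OF Lj CsC]) (simp add: VC_def)
        have Mfe: "Mf (err k) = (Ab j j - L j * Cb j j) *\<^sub>v eh - (Ab j j *\<^sub>v sq j - L j *\<^sub>v (Cb j j *\<^sub>v sq j))"
        proof -
          have "Mf (err k) = (Ab j j - L j * Cb j j) *\<^sub>v eh - (Ab j j - L j * Cb j j) *\<^sub>v sq j"
            unfolding Mf_def err_def eh_def[symmetric]
            using mult_minus_distrib_mat_vec[OF MM ehC sjC] by (simp add: sq_def)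
          also have "(Ab j j - L j * Cb j j) *\<^sub>v sq j = Ab j j *\<^sub>v sq j - (L j * Cb j j) *\<^sub>v sq j"
            by (rule minus_mult_distrib_mat_vec[OF Ajj LC sjC])
          also have "(L j * Cb j j) *\<^sub>v sq j = L j *\<^sub>v (Cb j j *\<^sub>v sq j)"
            by (rule assoc_mult_mat_vec[OF Lj Cjj sjC])
          finally show ?thesis .
        qed
        show "err (Suc k) = Mf (err k)"
        proof (rule carrier_eqI[OF errC])
          show "Mf (err k) \<in> carrier_vec (d j)" using MfC errC by blast
          fix a assume a: "a < d j"
          have "err (Suc k) $ a = zh (Suc k) j j $ a - sub d j (z (Suc k)) $ a"
            using a by (simp add: err_def)
          also have "\<dots> = ((Ab j j - L j * Cb j j) *\<^sub>v eh) $ a + (VA $ a - (L j *\<^sub>v VC) $ a)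
               + ((L j *\<^sub>v (Cb j j *\<^sub>v sq j)) $ a + (L j *\<^sub>v VC) $ a) - ((Ab j j *\<^sub>v sq j) $ a + VA $ a)"
            unfolding S V1 LCxk zs using a Lj MM Ajj by (simp add: VA_def)
          also have "\<dots> = Mf (err k) $ a"
            unfolding Mfe using a Lj MM Ajj by simp
          finally show "err (Suc k) $ a = Mf (err k) $ a" .
        qed
      qed
      have errp: "\<And>p. err (K' + p) = (Mf ^^ p) (err K')"
      proof -
        fix p show "err (K' + p) = (Mf ^^ p) (err K')"
          by (induction p) (use rec in auto)
      qed
      have srcex: "\<And>k. K' + m \<le> k \<Longrightarrow> zh k j j = sub d j (z k)"
      proof -
        fix k assume k: "K' + m \<le> k"
        have e: "k - K' = (k - K' - m) + m" using k by simp
        have "err k = (Mf ^^ (k - K')) (err K')" using errp[of "k - K'"] k by simp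
        also have "\<dots> = (Mf ^^ ((k - K' - m) + m)) (err K')" using e by metis
        also have "\<dots> = (Mf ^^ (k - K' - m)) ((Mf ^^ m) (err K'))" by (simp only: funpow_add comp_apply)
        also have "(Mf ^^ m) (err K') = 0\<^sub>v (d j)" using nil errC by (simp add: Mf_def)
        finally have "err k = 0\<^sub>v (d j)" using Mf0 by simp
        then have "zh k j j - sub d j (z k) = 0\<^sub>v (d j)" by (simp add: err_def)
        moreover have "zh k j j \<in> carrier_vec (d j)" using carr j by simp
        ultimately show "zh k j j = sub d j (z k)" using minus_zero_eq[OF _ sub_carrier] by blast
      qed
      define K0 where "K0 = K' + m + 1"
      define Ms where "Ms = (\<lambda>k i. {l. l < N \<and> l \<noteq> i \<and> (l, i) \<in> E k \<and> tau k l j \<noteq> None})"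
      define Fs where "Fs = (\<lambda>k i. if tau k i j = None then Ms k i
                 else {l \<in> Ms k i. the (tau k l j) < the (tau k i j)})"
      define own where "own = (\<lambda>k i. vsum (d j) (\<lambda>q. Ab j q *\<^sub>v zh k i q) {..<j})"
      have nstep: "\<And>k i. i < N \<Longrightarrow> i \<noteq> j \<Longrightarrow>
         (Fs k i \<noteq> {} \<longrightarrow> (\<exists>u\<in>Fs k i. (\<forall>l\<in>Fs k i. the (tau k u j) \<le> the (tau k l j)) \<and>
              tau (Suc k) i j = Some (Suc (the (tau k u j))) \<and>
              zh (Suc k) i j = Ab j j *\<^sub>v zh k u j + own k i)) \<and>
         (Fs k i = {} \<longrightarrow> tau (Suc k) i j = map_option Suc (tau k i j) \<and>
              zh (Suc k) i j = Ab j j *\<^sub>v zh k i j + own k i)"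
      proof -
        fix k i assume i: "i < N" and ij: "i \<noteq> j"
        have H: "i < N \<longrightarrow> j < N \<longrightarrow> i \<noteq> j \<longrightarrow> (let M = {l. l < N \<and> l \<noteq> i \<and> (l, i) \<in> E k \<and> tau k l j \<noteq> None};
            F = (if tau k i j = None then M
                 else {l \<in> M. the (tau k l j) < the (tau k i j)});
            own = vsum (d j) (\<lambda>q. Ab j q *\<^sub>v zh k i q) {..<j} in
        (F \<noteq> {} \<longrightarrow>
           (\<exists>u\<in>F. (\<forall>l\<in>F. the (tau k u j) \<le> the (tau k l j)) \<and>
              tau (Suc k) i j = Some (Suc (the (tau k u j))) \<and>
              zh (Suc k) i j = Ab j j *\<^sub>v zh k u j + own)) \<and>
        (F = {} \<longrightarrow>
           tau (Suc k) i j = map_option Suc (tau k i j) \<and>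
           zh (Suc k) i j = Ab j j *\<^sub>v zh k i j + own))"
          using nons by blast
        then show "?thesis k i" using i j ij unfolding Let_def Ms_def Fs_def own_def by simp
      qed
      have SrcT: "\<And>k. tau k j j = Some 0" using src j by blast
      have nsexact: "\<And>k i u. K' \<le> k \<Longrightarrow> i < N \<Longrightarrow> zh k u j = sub d j (z k) \<Longrightarrow>
          Ab j j *\<^sub>v zh k u j + own k i = sub d j (z (Suc k))"
      proof -
        fix k i u assume k: "K' \<le> k" and i: "i < N" and u: "zh k u j = sub d j (z k)"
        have "own k i = vsum (d j) (\<lambda>q. Ab j q *\<^sub>v sub d q (z k)) {..<j}"
          unfolding own_def by (rule vsum_cong) (use low k i in auto)
        then show "Ab j j *\<^sub>v zh k u j + own k i = sub d j (z (Suc k))" using u zsub[OF j] by simp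
      qed
      have K0pos: "1 \<le> K0" by (simp add: K0_def)
      have P: "\<And>k. \<forall>i<N. \<forall>t. tau k i j = Some t \<and> t + K0 \<le> k \<longrightarrow> zh k i j = sub d j (z k)"
      proof -
        fix k show "\<forall>i<N. \<forall>t. tau k i j = Some t \<and> t + K0 \<le> k \<longrightarrow> zh k i j = sub d j (z k)"
        proof (induction k)
          case 0 then show ?case using K0pos by auto
        next
          case (Suc k)
          show ?case
          proof (intro allI impI)
            fix i t assume i: "i < N" and H: "tau (Suc k) i j = Some t \<and> t + K0 \<le> Suc k"
            have kK: "K' \<le> k" using H by (simp add: K0_def)
            show "zh (Suc k) i j = sub d j (z (Suc k))"
            proof (cases "i = j")
              case True
              then show ?thesis using srcex[of "Suc k"] H by (simp add: K0_def)
            next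
              case False
              note ns = nstep[OF i False, of k]
              show ?thesis
              proof (cases "Fs k i = {}")
                case False
                then obtain u where u: "u \<in> Fs k i" and tu: "tau (Suc k) i j = Some (Suc (the (tau k u j)))"
                  and zu: "zh (Suc k) i j = Ab j j *\<^sub>v zh k u j + own k i" using ns by blast
                have uM: "u \<in> Ms k i" using u by (auto simp: Fs_def split: if_splits)
                then have uN: "u < N" and un: "tau k u j \<noteq> None" by (auto simp: Ms_def)
                then obtain tv where tv: "tau k u j = Some tv" by auto
                have "tv + K0 \<le> k" using H tu tv by simp
                then have "zh k u j = sub d j (z k)" using Suc.IH uN tv by blast
                then show ?thesis using zu nsexact[OF kK i] by simp
              next
                case True
                then have tau1: "tau (Suc k) i j = map_option Suc (tau k i j)"
                  and zi: "zh (Suc k) i j = Ab j j *\<^sub>v zh k i j + own k i" using ns by auto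
                obtain tv where tv: "tau k i j = Some tv" and t: "t = Suc tv"
                  using tau1 H by (cases "tau k i j") auto
                have "zh k i j = sub d j (z k)" using Suc.IH i tv t H by auto
                then show ?thesis using zi nsexact[OF kK i] by simp
              qed
            qed
          qed
        qed
      qed
      define Good where "Good = (\<lambda>k i. \<exists>t. tau k i j = Some t \<and> t + K0 \<le> k)"
      have G1: "\<And>k i. i < N \<Longrightarrow> Good k i \<Longrightarrow> Good (Suc k) i"
      proof -
        fix k i assume i: "i < N" and g: "Good k i"
        then obtain ti where ti: "tau k i j = Some ti" "ti + K0 \<le> k" by (auto simp: Good_def)
        show "Good (Suc k) i"
        proof (cases "i = j")
          case True
          then show ?thesis using SrcT[of k] SrcT[of "Suc k"] ti by (auto simp: Good_def)
        next
          case False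
          note ns = nstep[OF i False, of k]
          show ?thesis
          proof (cases "Fs k i = {}")
            case False
            then obtain u where u: "u \<in> Fs k i" and tu: "tau (Suc k) i j = Some (Suc (the (tau k u j)))"
              using ns by blast
            have "the (tau k u j) < ti" using u ti by (auto simp: Fs_def)
            then show ?thesis using tu ti by (auto simp: Good_def)
          next
            case True
            then have "tau (Suc k) i j = Some (Suc ti)" using ns ti by auto
            then show ?thesis using ti by (auto simp: Good_def)
          qed
        qed
      qed
      have Gm0: "\<And>k i p. i < N \<Longrightarrow> Good k i \<Longrightarrow> Good (k + p) i"
      proof -
        fix k i p assume i: "i < N" and g: "Good k i"
        show "Good (k + p) i" by (induction p) (use g G1[OF i] in auto)
      qed
      have Gm: "\<And>k k' i. i < N \<Longrightarrow> Good k i \<Longrightarrow> k \<le> k' \<Longrightarrow> Good k' i"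
        using Gm0 by (metis le_add_diff_inverse)
      have G2: "\<And>k l i. l < N \<Longrightarrow> i < N \<Longrightarrow> l \<noteq> i \<Longrightarrow> (l, i) \<in> E k \<Longrightarrow> Good k l \<Longrightarrow> Good (Suc k) i"
      proof -
        fix k l i assume l: "l < N" and i: "i < N" and li: "l \<noteq> i" and e: "(l, i) \<in> E k" and g: "Good k l"
        then obtain tl where tl: "tau k l j = Some tl" "tl + K0 \<le> k" by (auto simp: Good_def)
        show "Good (Suc k) i"
        proof (cases "i = j")
          case True
          then show ?thesis using SrcT[of "Suc k"] tl by (auto simp: Good_def)
        next
          case False
          note ns = nstep[OF i False, of k]
          show ?thesis
          proof (cases "Good k i")
            case True then show ?thesis using G1 i by blast
          next
            case ng: False
            have lM: "l \<in> Ms k i" using l li e tl by (simp add: Ms_def)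
            have lF: "l \<in> Fs k i"
            proof (cases "tau k i j")
              case None then show ?thesis using lM by (simp add: Fs_def)
            next
              case (Some ti)
              then have "tl < ti" using ng tl by (auto simp: Good_def)
              then show ?thesis using lM Some tl by (simp add: Fs_def)
            qed
            then obtain u where u: "u \<in> Fs k i" and mn: "\<forall>l'\<in>Fs k i. the (tau k u j) \<le> the (tau k l' j)"
              and tu: "tau (Suc k) i j = Some (Suc (the (tau k u j)))"
              using ns by blast
            have "the (tau k u j) \<le> tl" using mn lF tl by force
            then show ?thesis using tu tl by (auto simp: Good_def)
          qed
        qed
      qed
      have G3: "\<And>k. K0 \<le> k \<Longrightarrow> Good k j" using SrcT by (simp add: Good_def)
      obtain tt where tt: "strict_mono tt"
        and conn: "\<forall>q. \<forall>i<N. \<forall>l<N. (i, l) \<in> (\<Union>\<tau>\<in>{tt q..<tt (Suc q)}. E \<tau>)\<^sup>*"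
        using graph unfolding graph_conditions_def Let_def by blast
      define Sg where "Sg = (\<lambda>k. {i. i < N \<and> Good k i})"
      have SgN: "\<And>k. Sg k \<subseteq> {..<N}" by (auto simp: Sg_def)
      have Sgfin: "\<And>k. finite (Sg k)" using SgN finite_subset by blast
      have Sgmono: "\<And>k k'. k \<le> k' \<Longrightarrow> Sg k \<subseteq> Sg k'" using Gm by (auto simp: Sg_def)
      have grow: "\<And>q. K0 \<le> tt q \<Longrightarrow> Sg (tt q) \<noteq> {..<N} \<Longrightarrow> \<exists>b. b \<in> Sg (tt (Suc q)) \<and> b \<notin> Sg (tt q)"
      proof -
        fix q assume q: "K0 \<le> tt q" and ne: "Sg (tt q) \<noteq> {..<N}"
        have jS: "j \<in> Sg (tt q)" using G3[OF q] j by (simp add: Sg_def)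
        obtain i1 where i1: "i1 < N" "i1 \<notin> Sg (tt q)" using ne SgN by blast
        obtain a b where ab: "(a, b) \<in> (\<Union>\<tau>\<in>{tt q..<tt (Suc q)}. E \<tau>)" "a \<in> Sg (tt q)" "b \<notin> Sg (tt q)"
          using rtrancl_exit[OF conn[rule_format, OF j i1(1), of q] jS i1(2)] by blast
        then obtain \<tau> where tau: "tt q \<le> \<tau>" "\<tau> < tt (Suc q)" "(a, b) \<in> E \<tau>" by auto
        have abN: "a < N" "b < N" using E_V tau(3) by auto
        have ga: "Good \<tau> a" using Gm[OF abN(1) _ tau(1)] ab(2) by (simp add: Sg_def)
        have anb: "a \<noteq> b" using ab by auto
        have "Good (Suc \<tau>) b" using G2[OF abN(1) abN(2) anb tau(3) ga] .
        then have "Good (tt (Suc q)) b" using Gm[OF abN(2)] tau(2) by simp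
        then show "\<exists>b. b \<in> Sg (tt (Suc q)) \<and> b \<notin> Sg (tt q)" using abN ab(3) by (auto simp: Sg_def)
      qed
      have count: "\<And>p. min N (Suc p) \<le> card (Sg (tt (K0 + p)))"
      proof -
        fix p show "min N (Suc p) \<le> card (Sg (tt (K0 + p)))"
        proof (induction p)
          case 0
          have "K0 \<le> tt K0" using seq_suble[OF tt] .
          then have "j \<in> Sg (tt K0)" using G3 j by (simp add: Sg_def)
          then have "card (Sg (tt K0)) \<ge> 1" using Sgfin by (metis One_nat_def Suc_leI card_gt_0_iff empty_iff)
          then show ?case by simp
        next
          case (Suc p)
          have K0le: "K0 \<le> tt (K0 + p)" using seq_suble[OF tt, of "K0 + p"] by simp
          have mono: "Sg (tt (K0 + p)) \<subseteq> Sg (tt (K0 + Suc p))"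
            using Sgmono strict_mono_leD[OF tt, of "K0 + p" "K0 + Suc p"] by simp
          show ?case
          proof (cases "Sg (tt (K0 + p)) = {..<N}")
            case True
            then have "card (Sg (tt (K0 + Suc p))) \<ge> N"
              using card_mono[OF Sgfin mono] by simp
            then show ?thesis by simp
          next
            case False
            then obtain b where b: "b \<in> Sg (tt (Suc (K0 + p)))" "b \<notin> Sg (tt (K0 + p))"
              using grow[OF K0le] by blast
            have "insert b (Sg (tt (K0 + p))) \<subseteq> Sg (tt (K0 + Suc p))" using b mono by auto
            then have "card (insert b (Sg (tt (K0 + p)))) \<le> card (Sg (tt (K0 + Suc p)))"
              using card_mono[OF Sgfin] by blast
            then have "Suc (card (Sg (tt (K0 + p)))) \<le> card (Sg (tt (K0 + Suc p)))"
              using b(2) Sgfin by simp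
            then show ?thesis using Suc.IH by simp
          qed
        qed
      qed
      define K1 where "K1 = tt (K0 + (N - 1))"
      have allS: "Sg K1 = {..<N}"
      proof -
        have "min N (Suc (N - 1)) \<le> card (Sg K1)" using count[of "N - 1"] by (simp add: K1_def)
        then have "card {..<N} \<le> card (Sg K1)" using N by simp
        then show ?thesis using card_seteq[OF finite_lessThan SgN] by blast
      qed
      have allG: "\<And>k i. K1 \<le> k \<Longrightarrow> i < N \<Longrightarrow> Good k i"
      proof -
        fix k i assume k: "K1 \<le> k" and i: "i < N"
        have "Good K1 i" using allS i by (auto simp: Sg_def)
        then show "Good k i" using Gm[OF i _ k] by simp
      qed
      show "\<exists>K. \<forall>k\<ge>K. \<forall>i<N. zh k i j = sub d j (z k)"
      proof (intro exI[of _ K1] allI impI)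
        fix k i assume k: "K1 \<le> k" and i: "i < N"
        obtain t where "tau k i j = Some t" "t + K0 \<le> k" using allG[OF k i] by (auto simp: Good_def)
        then show "zh k i j = sub d j (z k)" using P[of k] i by blast
      qed
    qed
    have claim: "\<And>j. j \<le> N \<Longrightarrow> \<exists>K. \<forall>k\<ge>K. \<forall>i<N. \<forall>q<j. zh k i q = sub d q (z k)"
    proof -
      fix j show "j \<le> N \<Longrightarrow> \<exists>K. \<forall>k\<ge>K. \<forall>i<N. \<forall>q<j. zh k i q = sub d q (z k)"
      proof (induction j)
        case 0 then show ?case by simp
      next
        case (Suc j)
        then obtain K' where K': "\<forall>k\<ge>K'. \<forall>i<N. \<forall>q<j. zh k i q = sub d q (z k)" by auto
        obtain K1 where K1: "\<forall>k\<ge>K1. \<forall>i<N. zh k i j = sub d j (z k)"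
          using step[OF _ K'] Suc.prems by auto
        have "\<forall>k\<ge>max K' K1. \<forall>i<N. \<forall>q<Suc j. zh k i q = sub d q (z k)"
          using K' K1 by (auto simp: less_Suc_eq)
        then show ?case by blast
      qed
    qed
    obtain K where K: "\<forall>k\<ge>K. \<forall>i<N. \<forall>q<N. zh k i q = sub d q (z k)" using claim[of N] by auto
    have "\<forall>k\<ge>K. \<forall>i<N. vnorm (T *\<^sub>v stack_vec d N (zh k i) - x k) \<le> 0 * \<rho> ^ k"
    proof (intro allI impI)
      fix k i assume k: "K \<le> k" and i: "i < N"
      have "stack_vec d N (zh k i) = z k" using stack_sub[of "z k" d N "zh k i"] zC K k i by (simp add: n_def)
      then have "T *\<^sub>v stack_vec d N (zh k i) - x k = 0\<^sub>v n" using xz[of k] xC[of k] by simp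
      then show "vnorm (T *\<^sub>v stack_vec d N (zh k i) - x k) \<le> 0 * \<rho> ^ k" by simp
    qed
    then show "\<exists>c\<ge>0. \<exists>K. \<forall>k\<ge>K. \<forall>i<N. vnorm (T *\<^sub>v stack_vec d N (zh k i) - x k) \<le> c * \<rho> ^ k"
      by (intro exI[of _ 0]) auto
  qed
  qed
qed


end
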